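(* Let $G$ be a finite GVZ-group with $|\mathrm{cd}(G)|=2$. Then $G$ has nilpotency class $2$.
   Context: All groups are finite. $\mathrm{Irr}(G)$ is the set of complex irreducible characters of $G$ and $\mathrm{cd}(G)=\{\chi(1):\chi\in\mathrm{Irr}(G)\}$. For a character $\chi$, $Z(\chi)=\{g\in G: |\chi(g)|=\chi(1)\}$. A nonabelian group $G$ is a GVZ-group if for every $\chi\in\mathrm{Irr}(G)$ we have $\chi(g)=0$ for all $g\in G\setminus Z(\chi)$. *)

theory Defs
  imports "HOL-Algebra.Algebra" "Jordan_Normal_Form.Matrix"
begin

definition mat_trace :: "complex mat \<Rightarrow> complex" where
  "mat_trace A = (\<Sum>i<dim_row A. A $$ (i, i))"

definition is_rep :: "('a, 'b) monoid_scheme \<Rightarrow> nat \<Rightarrow> ('a \<Rightarrow> complex mat) \<Rightarrow> bool" where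
  "is_rep G n \<rho> \<longleftrightarrow> n \<ge> 1 \<and>
     (\<forall>g \<in> carrier G. \<rho> g \<in> carrier_mat n n) \<and>
     \<rho> \<one>\<^bsub>G\<^esub> = 1\<^sub>m n \<and>
     (\<forall>g \<in> carrier G. \<forall>h \<in> carrier G. \<rho> (g \<otimes>\<^bsub>G\<^esub> h) = \<rho> g * \<rho> h)"

definition invariant_subspace :: "('a, 'b) monoid_scheme \<Rightarrow> nat \<Rightarrow> ('a \<Rightarrow> complex mat) \<Rightarrow> complex vec set \<Rightarrow> bool" where
  "invariant_subspace G n \<rho> W \<longleftrightarrow> W \<subseteq> carrier_vec n \<and> 0\<^sub>v n \<in> W \<and>
     (\<forall>v \<in> W. \<forall>w \<in> W. v + w \<in> W) \<and>
     (\<forall>c. \<forall>v \<in> W. c \<cdot>\<^sub>v v \<in> W) \<and>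
     (\<forall>g \<in> carrier G. \<forall>v \<in> W. \<rho> g *\<^sub>v v \<in> W)"

definition irreducible_rep :: "('a, 'b) monoid_scheme \<Rightarrow> nat \<Rightarrow> ('a \<Rightarrow> complex mat) \<Rightarrow> bool" where
  "irreducible_rep G n \<rho> \<longleftrightarrow> is_rep G n \<rho> \<and>
     (\<forall>W. invariant_subspace G n \<rho> W \<longrightarrow> W = {0\<^sub>v n} \<or> W = carrier_vec n)"

definition character :: "('a, 'b) monoid_scheme \<Rightarrow> ('a \<Rightarrow> complex mat) \<Rightarrow> 'a \<Rightarrow> complex" where
  "character G \<rho> = (\<lambda>g. if g \<in> carrier G then mat_trace (\<rho> g) else 0)"

definition Irr :: "('a, 'b) monoid_scheme \<Rightarrow> ('a \<Rightarrow> complex) set" where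
  "Irr G = {character G \<rho> | \<rho> n. irreducible_rep G n \<rho>}"

definition cd :: "('a, 'b) monoid_scheme \<Rightarrow> complex set" where
  "cd G = {\<chi> \<one>\<^bsub>G\<^esub> | \<chi>. \<chi> \<in> Irr G}"

definition char_center :: "('a, 'b) monoid_scheme \<Rightarrow> ('a \<Rightarrow> complex) \<Rightarrow> 'a set" where
  "char_center G \<chi> = {g \<in> carrier G. complex_of_real (cmod (\<chi> g)) = \<chi> \<one>\<^bsub>G\<^esub>}"

definition GVZ_group :: "('a, 'b) monoid_scheme \<Rightarrow> bool" where
  "GVZ_group G \<longleftrightarrow> \<not> comm_group G \<and>
     (\<forall>\<chi> \<in> Irr G. \<forall>g \<in> carrier G - char_center G \<chi>. \<chi> g = 0)"

definition group_center :: "('a, 'b) monoid_scheme \<Rightarrow> 'a set" where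
  "group_center G = {z \<in> carrier G. \<forall>g \<in> carrier G. z \<otimes>\<^bsub>G\<^esub> g = g \<otimes>\<^bsub>G\<^esub> z}"

definition nilpotency_class_2 :: "('a, 'b) monoid_scheme \<Rightarrow> bool" where
  "nilpotency_class_2 G \<longleftrightarrow> \<not> comm_group G \<and> derived G (carrier G) \<subseteq> group_center G"

end

theory Submission
  imports Defs "Jordan_Normal_Form.Spectral_Radius"
begin

definition adj :: "complex mat \<Rightarrow> complex mat" where
  "adj A = mat (dim_col A) (dim_row A) (\<lambda>(i,j). cnj (A $$ (j,i)))"

lemma adj_dim[simp]: "dim_row (adj A) = dim_col A" "dim_col (adj A) = dim_row A"
  by (auto simp: adj_def)

lemma adj_carrier[simp, intro]: "A \<in> carrier_mat n m \<Longrightarrow> adj A \<in> carrier_mat m n"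
  by (auto simp: adj_def)

lemma adj_index[simp]: "i < dim_col A \<Longrightarrow> j < dim_row A \<Longrightarrow> adj A $$ (i,j) = cnj (A $$ (j,i))"
  by (auto simp: adj_def)

lemma adj_adj[simp]: "adj (adj A) = A"
  by (rule eq_matI, auto)

lemma adj_mult: assumes "dim_col A = dim_row B" shows "adj (A * B) = adj B * adj A"
proof (rule eq_matI)
  fix i j assume i: "i < dim_row (adj B * adj A)" and j: "j < dim_col (adj B * adj A)"
  have "adj (A * B) $$ (i, j) = cnj (\<Sum>k<dim_col A. A $$ (j,k) * B $$ (k,i))"
    using i j assms by (simp add: scalar_prod_def atLeast0LessThan)
  also have "\<dots> = (\<Sum>k<dim_col A. cnj (B $$ (k,i)) * cnj (A $$ (j,k)))"
    by (simp add: mult.commute)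
  also have "\<dots> = (adj B * adj A) $$ (i,j)"
    using i j assms by (simp add: scalar_prod_def atLeast0LessThan)
  finally show "adj (A * B) $$ (i, j) = (adj B * adj A) $$ (i,j)" .
qed (use assms in auto)

lemma adj_one[simp]: "adj (1\<^sub>m n) = 1\<^sub>m n"
  by (rule eq_matI, auto)

lemma adj_zero[simp]: "adj (0\<^sub>m n m) = 0\<^sub>m m n"
  by (rule eq_matI, auto)

lemma adj_smult[simp]: "adj (c \<cdot>\<^sub>m A) = cnj c \<cdot>\<^sub>m adj A"
  by (rule eq_matI, auto)

lemma adj_add: "A \<in> carrier_mat n m \<Longrightarrow> B \<in> carrier_mat n m \<Longrightarrow> adj (A + B) = adj A + adj B"
  by (rule eq_matI, auto)

lemma trace_comm: assumes "A \<in> carrier_mat n m" "B \<in> carrier_mat m n"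
  shows "mat_trace (A * B) = mat_trace (B * A)"
proof -
  have "mat_trace (A * B) = (\<Sum>i<n. \<Sum>k<m. A $$ (i,k) * B $$ (k,i))"
    using assms by (simp add: mat_trace_def scalar_prod_def atLeast0LessThan)
  also have "\<dots> = (\<Sum>k<m. \<Sum>i<n. B $$ (k,i) * A $$ (i,k))"
    by (subst sum.swap) (simp add: mult.commute)
  also have "\<dots> = mat_trace (B * A)"
    using assms by (simp add: mat_trace_def scalar_prod_def atLeast0LessThan)
  finally show ?thesis .
qed

lemma trace_one[simp]: "mat_trace (1\<^sub>m n) = of_nat n"
  by (simp add: mat_trace_def)

lemma trace_smult[simp]: "A \<in> carrier_mat n n \<Longrightarrow> mat_trace (c \<cdot>\<^sub>m A) = c * mat_trace A"
  unfolding mat_trace_def sum_distrib_left by (rule sum.cong, auto)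

lemma trace_add: "A \<in> carrier_mat n n \<Longrightarrow> B \<in> carrier_mat n n \<Longrightarrow> mat_trace (A + B) = mat_trace A + mat_trace B"
  by (simp add: mat_trace_def sum.distrib)

definition unitary :: "nat \<Rightarrow> complex mat \<Rightarrow> bool" where
  "unitary n U \<longleftrightarrow> U \<in> carrier_mat n n \<and> adj U * U = 1\<^sub>m n"

lemma unitary_carrier: "unitary n U \<Longrightarrow> U \<in> carrier_mat n n"
  by (simp add: unitary_def)

lemma unitary_right: "unitary n U \<Longrightarrow> U * adj U = 1\<^sub>m n"
  unfolding unitary_def using mat_mult_left_right_inverse[of "adj U" n U] by auto

definition urep :: "('a, 'b) monoid_scheme \<Rightarrow> nat \<Rightarrow> ('a \<Rightarrow> complex mat) \<Rightarrow> bool" where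
  "urep G n \<rho> \<longleftrightarrow> is_rep G n \<rho> \<and> (\<forall>g \<in> carrier G. unitary n (\<rho> g))"

lemma rep_carrier: "is_rep G n \<rho> \<Longrightarrow> g \<in> carrier G \<Longrightarrow> \<rho> g \<in> carrier_mat n n"
  by (simp add: is_rep_def)

lemma rep_mult: "is_rep G n \<rho> \<Longrightarrow> g \<in> carrier G \<Longrightarrow> h \<in> carrier G \<Longrightarrow> \<rho> (g \<otimes>\<^bsub>G\<^esub> h) = \<rho> g * \<rho> h"
  by (simp add: is_rep_def)

lemma rep_one: "is_rep G n \<rho> \<Longrightarrow> \<rho> \<one>\<^bsub>G\<^esub> = 1\<^sub>m n"
  by (simp add: is_rep_def)

lemma (in group) rep_inv_left: "is_rep G n \<rho> \<Longrightarrow> g \<in> carrier G \<Longrightarrow> \<rho> (inv g) * \<rho> g = 1\<^sub>m n"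
  by (metis inv_closed l_inv rep_mult rep_one)

lemma (in group) rep_inv_right: "is_rep G n \<rho> \<Longrightarrow> g \<in> carrier G \<Longrightarrow> \<rho> g * \<rho> (inv g) = 1\<^sub>m n"
  by (metis inv_closed r_inv rep_mult rep_one)

lemma (in group) urep_adj: assumes "urep G n \<rho>" "g \<in> carrier G"
  shows "adj (\<rho> g) = \<rho> (inv g)"
proof -
  have r: "is_rep G n \<rho>" and u: "unitary n (\<rho> g)" using assms by (auto simp: urep_def)
  have c: "\<rho> g \<in> carrier_mat n n" "\<rho> (inv g) \<in> carrier_mat n n" using r assms by (auto simp: rep_carrier)
  have "adj (\<rho> g) = adj (\<rho> g) * (\<rho> g * \<rho> (inv g))" using rep_inv_right[OF r assms(2)] c by simp
  also have "\<dots> = (adj (\<rho> g) * \<rho> g) * \<rho> (inv g)" using c by (simp add: assoc_mult_mat[of _ n n _ n _ n])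
  also have "\<dots> = \<rho> (inv g)" using u c unfolding unitary_def by simp
  finally show ?thesis .
qed

lemma trace_adj: "A \<in> carrier_mat n n \<Longrightarrow> mat_trace (adj A) = cnj (mat_trace A)"
  by (simp add: mat_trace_def)

lemma (in group) urep_trace_inv: assumes "urep G n \<rho>" "g \<in> carrier G"
  shows "mat_trace (\<rho> (inv g)) = cnj (mat_trace (\<rho> g))"
  using urep_adj[OF assms] trace_adj[of "\<rho> g" n] assms by (auto simp: urep_def rep_carrier)

lemma unitary_col: assumes "unitary n U" "j < n"
  shows "(\<Sum>k<n. (cmod (U $$ (k,j)))\<^sup>2) = 1"
proof -
  have c: "U \<in> carrier_mat n n" and e: "adj U * U = 1\<^sub>m n" using assms by (auto simp: unitary_def)
  have "(adj U * U) $$ (j,j) = (\<Sum>k<n. cnj (U $$ (k,j)) * U $$ (k,j))"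
    using c assms(2) by (simp add: scalar_prod_def atLeast0LessThan)
  also have "\<dots> = (\<Sum>k<n. complex_of_real ((cmod (U $$ (k,j)))\<^sup>2))"
    by (rule sum.cong, simp, metis complex_norm_square mult.commute)
  finally have "complex_of_real (\<Sum>k<n. (cmod (U $$ (k,j)))\<^sup>2) = 1"
    using e assms(2) by simp
  thus ?thesis by (metis of_real_eq_1_iff)
qed

lemma complex_re_eq_norm: assumes "Re z = cmod z" shows "z = complex_of_real (Re z)"
proof -
  have "(cmod z)\<^sup>2 = (Re z)\<^sup>2 + (Im z)\<^sup>2" by (simp add: cmod_power2)
  hence "Im z = 0" using assms by simp
  thus ?thesis by (simp add: complex_eq_iff)
qed

lemma sum_le_eq_each:
  fixes f :: "nat \<Rightarrow> real"
  assumes "finite A" "\<And>j. j \<in> A \<Longrightarrow> f j \<le> c" "sum f A \<ge> real (card A) * c" "j \<in> A"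
  shows "f j = c"
proof -
  have "(\<Sum>i\<in>A. c - f i) = real (card A) * c - sum f A" by (simp add: sum_subtractf)
  hence "(\<Sum>i\<in>A. c - f i) \<le> 0" using assms(3) by simp
  moreover have "\<forall>i\<in>A. c - f i \<ge> 0" using assms(2) by simp
  ultimately have "\<forall>i\<in>A. c - f i = 0" using sum_nonneg_eq_0_iff[OF assms(1)]
    by (metis (no_types, lifting) antisym sum_nonneg)
  thus ?thesis using assms(4) by simp
qed

lemma unitary_trace_scalar:
  assumes U: "unitary n U" and n: "n > 0" and t: "cmod (mat_trace U) = real n"
  shows "U = (mat_trace U / of_nat n) \<cdot>\<^sub>m 1\<^sub>m n"
proof -
  have c: "U \<in> carrier_mat n n" using U by (simp add: unitary_def)
  define s where "s = mat_trace U"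
  have s_def': "s = (\<Sum>j<n. U $$ (j,j))" using c by (simp add: s_def mat_trace_def)
  have col: "\<And>j. j < n \<Longrightarrow> (\<Sum>k<n. (cmod (U $$ (k,j)))\<^sup>2) = 1" using unitary_col[OF U] by auto
  have le1: "cmod (U $$ (j,j)) \<le> 1" if j: "j < n" for j
  proof -
    have "(cmod (U $$ (j,j)))\<^sup>2 \<le> (\<Sum>k<n. (cmod (U $$ (k,j)))\<^sup>2)"
      by (rule member_le_sum, use j in auto)
    hence "(cmod (U $$ (j,j)))\<^sup>2 \<le> 1\<^sup>2" using col[OF j] by simp
    thus ?thesis by (rule power2_le_imp_le, simp)
  qed
  have "real n = cmod s" using t s_def by simp
  also have "\<dots> \<le> (\<Sum>j<n. cmod (U $$ (j,j)))" unfolding s_def' by (rule norm_sum)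
  finally have sumge: "(\<Sum>j<n. cmod (U $$ (j,j))) \<ge> real (card {..<n}) * 1" by simp
  have eq1: "cmod (U $$ (j,j)) = 1" if j: "j < n" for j
    by (rule sum_le_eq_each[OF _ _ sumge], use le1 j in auto)
  have offd: "U $$ (k,j) = 0" if j: "j < n" and k: "k < n" and kj: "k \<noteq> j" for j k
  proof -
    have "(\<Sum>k<n. (cmod (U $$ (k,j)))\<^sup>2) = (cmod (U $$ (j,j)))\<^sup>2 + (\<Sum>k\<in>{..<n}-{j}. (cmod (U $$ (k,j)))\<^sup>2)"
      by (rule sum.remove, use j in auto)
    hence "(\<Sum>k\<in>{..<n}-{j}. (cmod (U $$ (k,j)))\<^sup>2) = 0" using col[OF j] eq1[OF j] by simp
    hence "\<forall>k\<in>{..<n}-{j}. (cmod (U $$ (k,j)))\<^sup>2 = 0"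
      by (subst sum_nonneg_eq_0_iff[symmetric], auto)
    thus ?thesis using k kj by auto
  qed
  have cs: "s * cnj s = of_nat (n * n)"
    using t s_def by (metis complex_norm_square mult.commute of_nat_mult of_real_of_nat_eq power2_eq_square)
  have re_le: "Re (U $$ (j,j) * cnj s) \<le> real n" if j: "j < n" for j
  proof -
    have "Re (U $$ (j,j) * cnj s) \<le> cmod (U $$ (j,j) * cnj s)" by (rule complex_Re_le_cmod)
    also have "\<dots> = real n" using eq1[OF j] t s_def by (simp add: norm_mult)
    finally show ?thesis .
  qed
  have "(\<Sum>j<n. Re (U $$ (j,j) * cnj s)) = Re (s * cnj s)"
    unfolding s_def' by (simp add: sum_distrib_right Re_sum)
  also have "\<dots> = real (card {..<n}) * real n" using cs by simp
  finally have resum: "(\<Sum>j<n. Re (U $$ (j,j) * cnj s)) \<ge> real (card {..<n}) * real n" by simp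
  have diag: "U $$ (j,j) = s / of_nat n" if j: "j < n" for j
  proof -
    have r: "Re (U $$ (j,j) * cnj s) = real n"
      by (rule sum_le_eq_each[OF _ _ resum], use re_le j in auto)
    have "cmod (U $$ (j,j) * cnj s) = real n" using eq1[OF j] t s_def by (simp add: norm_mult)
    hence "U $$ (j,j) * cnj s = of_nat n" using complex_re_eq_norm[of "U $$ (j,j) * cnj s"] r by simp
    hence a: "U $$ (j,j) * cnj s = of_nat n" .
    have "U $$ (j,j) * (s * cnj s) = (U $$ (j,j) * cnj s) * s" by (simp add: ac_simps)
    hence "U $$ (j,j) * (of_nat n * of_nat n) = of_nat n * s" using a cs by simp
    hence "(U $$ (j,j) * of_nat n) * of_nat n = s * of_nat n" by (simp add: ac_simps)
    hence "U $$ (j,j) * of_nat n = s" using n by simp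
    thus ?thesis using n by (simp add: field_simps)
  qed
  show ?thesis
    by (rule eq_matI, use c diag offd s_def in auto)
qed

lemma scalar_unitary_trace:
  assumes U: "unitary n U" and e: "U = \<mu> \<cdot>\<^sub>m 1\<^sub>m n"
  shows "cmod (mat_trace U) = real n"
proof (cases "n = 0")
  case True thus ?thesis using e by (simp add: mat_trace_def)
next
  case False
  have "adj U * U = 1\<^sub>m n" using U by (simp add: unitary_def)
  moreover have "adj U * U = \<mu> \<cdot>\<^sub>m (cnj \<mu> \<cdot>\<^sub>m 1\<^sub>m n)"
    using e by (simp add: mult_smult_assoc_mat[of _ n n _ n] mult_smult_distrib[of _ n n _ n])
  moreover have "\<mu> \<cdot>\<^sub>m (cnj \<mu> \<cdot>\<^sub>m 1\<^sub>m n) = (cnj \<mu> * \<mu>) \<cdot>\<^sub>m (1\<^sub>m n :: complex mat)"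
    by (rule eq_matI, auto)
  ultimately have "(cnj \<mu> * \<mu>) \<cdot>\<^sub>m 1\<^sub>m n = 1\<^sub>m n" by (metis (no_types))
  hence "(((cnj \<mu> * \<mu>) \<cdot>\<^sub>m 1\<^sub>m n) $$ (0,0)) = (1\<^sub>m n :: complex mat) $$ (0,0)" by simp
  hence "cnj \<mu> * \<mu> = 1" using False by simp
  hence "complex_of_real ((cmod \<mu>)\<^sup>2) = 1" using complex_norm_square[of \<mu>] by (simp only: mult.commute)
  hence "(cmod \<mu>)\<^sup>2 = 1" by (simp only: of_real_eq_1_iff)
  hence "cmod \<mu> = 1" using norm_ge_zero[of \<mu>] by (simp add: power2_eq_1_iff)
  moreover have "mat_trace U = \<mu> * of_nat n" using e trace_smult[of "1\<^sub>m n" n \<mu>] by simp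
  ultimately show ?thesis by (simp add: norm_mult)
qed

lemma mat_mult_entry:
  assumes "A \<in> carrier_mat n m" "B \<in> carrier_mat m p" "i < n" "k < p"
  shows "(A * B) $$ (i,k) = (\<Sum>a<m. A $$ (i,a) * B $$ (a,k))"
  using assms by (simp add: scalar_prod_def atLeast0LessThan)

lemma schur:
  assumes irr: "irreducible_rep G n \<rho>" and T: "T \<in> carrier_mat n n"
    and comm: "\<And>g. g \<in> carrier G \<Longrightarrow> T * \<rho> g = \<rho> g * T"
  shows "\<exists>c. T = c \<cdot>\<^sub>m 1\<^sub>m n"
proof -
  have rep: "is_rep G n \<rho>" using irr by (simp add: irreducible_rep_def)
  hence n: "n > 0" by (simp add: is_rep_def)
  obtain lam where "eigenvalue T lam" using spectrum_non_empty[OF T n] unfolding spectrum_def by auto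
  then obtain v where v: "v \<in> carrier_vec n" "v \<noteq> 0\<^sub>v n" "T *\<^sub>v v = lam \<cdot>\<^sub>v v"
    using T unfolding eigenvalue_def eigenvector_def by auto
  define W where "W = {u \<in> carrier_vec n. T *\<^sub>v u = lam \<cdot>\<^sub>v u}"
  have inv: "invariant_subspace G n \<rho> W"
    unfolding invariant_subspace_def
  proof (intro conjI ballI allI)
    show "W \<subseteq> carrier_vec n" by (auto simp: W_def)
    show "0\<^sub>v n \<in> W" using T by (auto simp: W_def)
    fix u w assume u: "u \<in> W" and w: "w \<in> W"
    show "u + w \<in> W" using u w T
      by (auto simp: W_def mult_add_distrib_mat_vec[OF T] smult_add_distrib_vec)
  next
    fix c u assume u: "u \<in> W"
    show "c \<cdot>\<^sub>v u \<in> W" using u T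
      by (auto simp: W_def mult_mat_vec[OF T] smult_smult_assoc mult.commute)
  next
    fix g u assume g: "g \<in> carrier G" and u: "u \<in> W"
    have rg: "\<rho> g \<in> carrier_mat n n" using rep g by (simp add: rep_carrier)
    have uc: "u \<in> carrier_vec n" and tu: "T *\<^sub>v u = lam \<cdot>\<^sub>v u" using u by (auto simp: W_def)
    have "T *\<^sub>v (\<rho> g *\<^sub>v u) = (T * \<rho> g) *\<^sub>v u" using T rg uc by simp
    also have "\<dots> = (\<rho> g * T) *\<^sub>v u" using comm[OF g] by simp
    also have "\<dots> = \<rho> g *\<^sub>v (lam \<cdot>\<^sub>v u)" using T rg uc tu by simp
    also have "\<dots> = lam \<cdot>\<^sub>v (\<rho> g *\<^sub>v u)" using mult_mat_vec[OF rg uc] .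
    finally show "\<rho> g *\<^sub>v u \<in> W" using rg uc by (auto simp: W_def)
  qed
  have "v \<in> W" using v by (auto simp: W_def)
  hence "W \<noteq> {0\<^sub>v n}" using v by auto
  hence Wall: "W = carrier_vec n" using irr inv by (auto simp: irreducible_rep_def)
  have "T = lam \<cdot>\<^sub>m 1\<^sub>m n"
  proof (rule eq_matI)
    fix i k assume i: "i < dim_row (lam \<cdot>\<^sub>m 1\<^sub>m n)" and k: "k < dim_col (lam \<cdot>\<^sub>m 1\<^sub>m n)"
    have "unit_vec n k \<in> W" using Wall k by auto
    hence "T *\<^sub>v unit_vec n k = lam \<cdot>\<^sub>v unit_vec n k" by (auto simp: W_def)
    hence "(T *\<^sub>v unit_vec n k) $ i = (lam \<cdot>\<^sub>v unit_vec n k) $ i" by simp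
    thus "T $$ (i,k) = (lam \<cdot>\<^sub>m 1\<^sub>m n) $$ (i,k)" using i k T by (auto simp: row_def)
  qed (use T in auto)
  thus ?thesis by blast
qed

lemma (in group) sum_reindex_left:
  assumes h: "h \<in> carrier G"
  shows "(\<Sum>g\<in>carrier G. f (h \<otimes> g)) = (\<Sum>g\<in>carrier G. f g)"
proof -
  have "bij_betw (\<lambda>g. h \<otimes> g) (carrier G) (carrier G)"
    by (rule bij_betw_byWitness[where f'="\<lambda>g. inv h \<otimes> g"], use h in \<open>auto simp: m_assoc[symmetric]\<close>)
  thus ?thesis by (rule sum.reindex_bij_betw)
qed

lemma (in group) sum_reindex_right:
  assumes h: "h \<in> carrier G"
  shows "(\<Sum>g\<in>carrier G. f (g \<otimes> h)) = (\<Sum>g\<in>carrier G. f g)"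
proof -
  have "bij_betw (\<lambda>g. g \<otimes> h) (carrier G) (carrier G)"
    by (rule bij_betw_byWitness[where f'="\<lambda>g. g \<otimes> inv h"], use h in \<open>auto simp: m_assoc\<close>)
  thus ?thesis by (rule sum.reindex_bij_betw)
qed

context group begin

lemma rep_dim: "is_rep G n \<rho> \<Longrightarrow> g \<in> carrier G \<Longrightarrow> dim_row (\<rho> g) = n"
  "is_rep G n \<rho> \<Longrightarrow> g \<in> carrier G \<Longrightarrow> dim_col (\<rho> g) = n"
  using rep_carrier carrier_matD by metis+

lemma rep_entry_mult:
  assumes rep: "is_rep G n \<rho>" and g: "g \<in> carrier G" and h: "h \<in> carrier G" and i: "i < n" and k: "k < n"
  shows "\<rho> (g \<otimes> h) $$ (i,k) = (\<Sum>a<n. \<rho> g $$ (i,a) * \<rho> h $$ (a,k))"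
  using rep_mult[OF rep g h] mat_mult_entry[OF rep_carrier[OF rep g] rep_carrier[OF rep h] i k] by simp

lemma orth_key:
  assumes fin: "finite (carrier G)" and irr: "irreducible_rep G n \<rho>"
    and i: "i < n" and j: "j < n" and l: "l < n" and k: "k < n"
  shows "(\<Sum>g\<in>carrier G. \<rho> g $$ (i,j) * \<rho> (inv g) $$ (l,k))
     = (if i = k \<and> j = l then of_nat (card (carrier G)) / of_nat n else 0)"
proof -
  have rep: "is_rep G n \<rho>" using irr by (simp add: irreducible_rep_def)
  hence n: "n > 0" by (simp add: is_rep_def)
  define T where "T = mat n n (\<lambda>(a,b). \<Sum>g\<in>carrier G. \<rho> g $$ (a,j) * \<rho> (inv g) $$ (l,b))"
  have T: "T \<in> carrier_mat n n" by (simp add: T_def)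
  have comm: "T * \<rho> h = \<rho> h * T" if h: "h \<in> carrier G" for h
  proof (rule eq_matI)
    have rh: "\<rho> h \<in> carrier_mat n n" using rep h by (simp add: rep_carrier)
    fix a b assume a: "a < dim_row (\<rho> h * T)" and b: "b < dim_col (\<rho> h * T)"
    hence a: "a < n" and b: "b < n" using rh T by auto
    have "(T * \<rho> h) $$ (a,b) = (\<Sum>c<n. T $$ (a,c) * \<rho> h $$ (c,b))"
      by (rule mat_mult_entry[OF T rh a b])
    also have "\<dots> = (\<Sum>c<n. (\<Sum>g\<in>carrier G. \<rho> g $$ (a,j) * \<rho> (inv g) $$ (l,c)) * \<rho> h $$ (c,b))"
      using a by (simp add: T_def)
    also have "\<dots> = (\<Sum>g\<in>carrier G. \<rho> g $$ (a,j) * (\<Sum>c<n. \<rho> (inv g) $$ (l,c) * \<rho> h $$ (c,b)))"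
      by (simp add: sum_distrib_left sum_distrib_right mult.assoc sum.swap[of _ "{..<n}"])
    also have "\<dots> = (\<Sum>g\<in>carrier G. \<rho> g $$ (a,j) * \<rho> (inv g \<otimes> h) $$ (l,b))"
      by (rule sum.cong, simp, subst rep_entry_mult[OF rep _ h l b], auto)
    also have "\<dots> = (\<Sum>g\<in>carrier G. \<rho> (h \<otimes> g) $$ (a,j) * \<rho> (inv (h \<otimes> g) \<otimes> h) $$ (l,b))"
      by (rule sum_reindex_left[OF h, symmetric])
    also have "\<dots> = (\<Sum>g\<in>carrier G. \<rho> (h \<otimes> g) $$ (a,j) * \<rho> (inv g) $$ (l,b))"
      by (rule sum.cong, simp, use h in \<open>simp add: inv_mult_group m_assoc\<close>)
    also have "\<dots> = (\<Sum>g\<in>carrier G. (\<Sum>c<n. \<rho> h $$ (a,c) * \<rho> g $$ (c,j)) * \<rho> (inv g) $$ (l,b))"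
      by (rule sum.cong, simp, subst rep_entry_mult[OF rep h _ a j], auto)
    also have "\<dots> = (\<Sum>c<n. \<rho> h $$ (a,c) * (\<Sum>g\<in>carrier G. \<rho> g $$ (c,j) * \<rho> (inv g) $$ (l,b)))"
      by (simp add: sum_distrib_left sum_distrib_right mult.assoc sum.swap[of _ "{..<n}"])
    also have "\<dots> = (\<Sum>c<n. \<rho> h $$ (a,c) * T $$ (c,b))"
      using b by (simp add: T_def)
    also have "\<dots> = (\<rho> h * T) $$ (a,b)"
      by (rule mat_mult_entry[OF rh T a b, symmetric])
    finally show "(T * \<rho> h) $$ (a,b) = (\<rho> h * T) $$ (a,b)" .
  qed (use T h rep_carrier[OF rep h] in auto)
  obtain c where Tc: "T = c \<cdot>\<^sub>m 1\<^sub>m n" using schur[OF irr T comm] by auto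
  have "of_nat n * c = mat_trace T" using Tc by (simp add: mat_trace_def)
  also have "\<dots> = (\<Sum>a<n. \<Sum>g\<in>carrier G. \<rho> g $$ (a,j) * \<rho> (inv g) $$ (l,a))"
    by (simp add: mat_trace_def T_def)
  also have "\<dots> = (\<Sum>g\<in>carrier G. \<Sum>a<n. \<rho> (inv g) $$ (l,a) * \<rho> g $$ (a,j))"
    by (subst sum.swap, simp add: mult.commute)
  also have "\<dots> = (\<Sum>g\<in>carrier G. \<rho> (inv g \<otimes> g) $$ (l,j))"
    by (rule sum.cong, simp, subst rep_entry_mult[OF rep _ _ l j], auto)
  also have "\<dots> = (\<Sum>g\<in>carrier G. (1\<^sub>m n :: complex mat) $$ (l,j))"
    by (rule sum.cong, simp, simp add: rep_one[OF rep])
  also have "\<dots> = of_nat (card (carrier G)) * (if l = j then 1 else 0)"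
    using l j by simp
  finally have cval: "c = (if l = j then of_nat (card (carrier G)) / of_nat n else 0)"
    using n by (auto simp: field_simps)
  have "(\<Sum>g\<in>carrier G. \<rho> g $$ (i,j) * \<rho> (inv g) $$ (l,k)) = T $$ (i,k)"
    using i k by (simp add: T_def)
  also have "\<dots> = (if i = k then c else 0)" using Tc i k by simp
  finally show ?thesis using cval by auto
qed

lemma char_orth:
  assumes fin: "finite (carrier G)" and irr: "irreducible_rep G n \<rho>"
  shows "(\<Sum>g\<in>carrier G. mat_trace (\<rho> g) * mat_trace (\<rho> (inv g))) = of_nat (card (carrier G))"
proof -
  have rep: "is_rep G n \<rho>" using irr by (simp add: irreducible_rep_def)
  hence n: "n > 0" by (simp add: is_rep_def)
  have "(\<Sum>g\<in>carrier G. mat_trace (\<rho> g) * mat_trace (\<rho> (inv g)))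
     = (\<Sum>g\<in>carrier G. (\<Sum>i<n. \<rho> g $$ (i,i)) * (\<Sum>l<n. \<rho> (inv g) $$ (l,l)))"
    by (rule sum.cong, simp, simp add: mat_trace_def rep_dim[OF rep])
  also have "\<dots> = (\<Sum>i<n. \<Sum>l<n. \<Sum>g\<in>carrier G. \<rho> g $$ (i,i) * \<rho> (inv g) $$ (l,l))"
    by (simp add: sum_product sum.swap[of _ "carrier G"])
  also have "\<dots> = (\<Sum>i<n. \<Sum>l<n. (if i = l then of_nat (card (carrier G)) / of_nat n else 0))"
    by (rule sum.cong, simp, rule sum.cong, simp, subst orth_key[OF fin irr], auto)
  also have "\<dots> = (\<Sum>i<n. of_nat (card (carrier G)) / of_nat n)"
    by simp
  also have "\<dots> = of_nat (card (carrier G))" using n by simp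
  finally show ?thesis .
qed

lemma avg_lemma:
  assumes fin: "finite (carrier G)" and irr: "irreducible_rep G n \<sigma>"
  shows "\<exists>c. (\<Sum>g\<in>carrier G. mat_trace (\<sigma> g)) = of_nat n * c \<and> (c \<noteq> 0 \<longrightarrow> (\<forall>h\<in>carrier G. \<sigma> h = 1\<^sub>m n))"
proof -
  have rep: "is_rep G n \<sigma>" using irr by (simp add: irreducible_rep_def)
  define P where "P = mat n n (\<lambda>(a,b). \<Sum>g\<in>carrier G. \<sigma> g $$ (a,b))"
  have P: "P \<in> carrier_mat n n" by (simp add: P_def)
  have left: "\<sigma> h * P = P" if h: "h \<in> carrier G" for h
  proof (rule eq_matI)
    have rh: "\<sigma> h \<in> carrier_mat n n" using rep h by (simp add: rep_carrier)
    fix a b assume a: "a < dim_row P" and b: "b < dim_col P"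
    hence a: "a < n" and b: "b < n" using P by auto
    have "(\<sigma> h * P) $$ (a,b) = (\<Sum>c<n. \<sigma> h $$ (a,c) * P $$ (c,b))" by (rule mat_mult_entry[OF rh P a b])
    also have "\<dots> = (\<Sum>g\<in>carrier G. \<Sum>c<n. \<sigma> h $$ (a,c) * \<sigma> g $$ (c,b))"
      using b by (simp add: P_def sum_distrib_left sum.swap[of _ "{..<n}"])
    also have "\<dots> = (\<Sum>g\<in>carrier G. \<sigma> (h \<otimes> g) $$ (a,b))"
      by (rule sum.cong, simp, subst rep_entry_mult[OF rep h _ a b], auto)
    also have "\<dots> = (\<Sum>g\<in>carrier G. \<sigma> g $$ (a,b))" by (rule sum_reindex_left[OF h])
    also have "\<dots> = P $$ (a,b)" using a b by (simp add: P_def)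
    finally show "(\<sigma> h * P) $$ (a,b) = P $$ (a,b)" .
  qed (use P rep_carrier[OF rep] that in auto)
  have right: "P * \<sigma> h = P" if h: "h \<in> carrier G" for h
  proof (rule eq_matI)
    have rh: "\<sigma> h \<in> carrier_mat n n" using rep h by (simp add: rep_carrier)
    fix a b assume a: "a < dim_row P" and b: "b < dim_col P"
    hence a: "a < n" and b: "b < n" using P by auto
    have "(P * \<sigma> h) $$ (a,b) = (\<Sum>c<n. P $$ (a,c) * \<sigma> h $$ (c,b))" by (rule mat_mult_entry[OF P rh a b])
    also have "\<dots> = (\<Sum>g\<in>carrier G. \<Sum>c<n. \<sigma> g $$ (a,c) * \<sigma> h $$ (c,b))"
      using a by (simp add: P_def sum_distrib_right sum.swap[of _ "{..<n}"])
    also have "\<dots> = (\<Sum>g\<in>carrier G. \<sigma> (g \<otimes> h) $$ (a,b))"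
      by (rule sum.cong, simp, subst rep_entry_mult[OF rep _ h a b], auto)
    also have "\<dots> = (\<Sum>g\<in>carrier G. \<sigma> g $$ (a,b))" by (rule sum_reindex_right[OF h])
    also have "\<dots> = P $$ (a,b)" using a b by (simp add: P_def)
    finally show "(P * \<sigma> h) $$ (a,b) = P $$ (a,b)" .
  qed (use P rep_carrier[OF rep] that in auto)
  obtain c where Pc: "P = c \<cdot>\<^sub>m 1\<^sub>m n" using schur[OF irr P] left right by metis
  have "(\<Sum>g\<in>carrier G. mat_trace (\<sigma> g)) = (\<Sum>g\<in>carrier G. \<Sum>a<n. \<sigma> g $$ (a,a))"
    by (rule sum.cong, simp, simp add: mat_trace_def rep_dim[OF rep])
  also have "\<dots> = (\<Sum>a<n. P $$ (a,a))" by (simp add: P_def sum.swap[of _ "carrier G"])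
  also have "\<dots> = of_nat n * c" using Pc by simp
  finally have tr: "(\<Sum>g\<in>carrier G. mat_trace (\<sigma> g)) = of_nat n * c" .
  have "\<sigma> h = 1\<^sub>m n" if c: "c \<noteq> 0" and h: "h \<in> carrier G" for h
  proof -
    have rh: "\<sigma> h \<in> carrier_mat n n" using rep h by (simp add: rep_carrier)
    have "\<sigma> h * P = c \<cdot>\<^sub>m \<sigma> h" using Pc rh by (simp add: mult_smult_distrib[OF rh one_carrier_mat])
    hence e: "c \<cdot>\<^sub>m \<sigma> h = c \<cdot>\<^sub>m 1\<^sub>m n" using left[OF h] Pc by simp
    show ?thesis
    proof (rule eq_matI)
      fix a b assume "a < dim_row (1\<^sub>m n :: complex mat)" "b < dim_col (1\<^sub>m n :: complex mat)"
      hence "(c \<cdot>\<^sub>m \<sigma> h) $$ (a,b) = (c \<cdot>\<^sub>m 1\<^sub>m n) $$ (a,b)" using e by simp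
      thus "\<sigma> h $$ (a,b) = (1\<^sub>m n :: complex mat) $$ (a,b)" using c rh \<open>a < _\<close> \<open>b < _\<close> by auto
    qed (use rh in auto)
  qed
  thus ?thesis using tr by blast
qed

end

lemma bij_idx:
  fixes e :: "nat \<Rightarrow> 'a" and m :: nat
  assumes b: "bij_betw e {0..<m} C" and c: "c \<in> C"
  shows "\<exists>j0<m. \<forall>j<m. (e j = c) \<longleftrightarrow> (j = j0)"
proof -
  obtain j0 where j0: "j0 \<in> {0..<m}" "e j0 = c" using b c unfolding bij_betw_def by auto
  have "\<forall>j<m. (e j = c) \<longleftrightarrow> (j = j0)"
  proof (intro allI impI)
    fix j assume j: "j < m"
    have inj: "inj_on e {0..<m}" using b unfolding bij_betw_def by auto
    show "(e j = c) \<longleftrightarrow> (j = j0)"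
    proof
      assume "e j = c"
      moreover have "j \<in> {0..<m}" using j by simp
      ultimately show "j = j0" using inj_onD[OF inj _ _ j0(1)] j0(2) by metis
    qed (use j0 in auto)
  qed
  thus ?thesis using j0 by auto
qed

context group begin

lemma reg_rep:
  assumes fin: "finite (carrier G)"
  shows "\<exists>m R. urep G m R \<and> (\<forall>x\<in>carrier G. R x = 1\<^sub>m m \<longrightarrow> x = \<one>)"
proof -
  define m where "m = card (carrier G)"
  obtain e where e: "bij_betw e {0..<m} (carrier G)"
    using ex_bij_betw_nat_finite[OF fin] unfolding m_def by auto
  have m: "m > 0" using fin by (auto simp: m_def card_gt_0_iff)
  have ec: "\<And>j. j < m \<Longrightarrow> e j \<in> carrier G" using e unfolding bij_betw_def by auto
  have einj: "\<And>i j. i < m \<Longrightarrow> j < m \<Longrightarrow> e i = e j \<longleftrightarrow> i = j"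
    using e unfolding bij_betw_def inj_on_def by auto
  define R where "R x = mat m m (\<lambda>(i,j). if e i = x \<otimes> e j then 1 else (0::complex))" for x
  have Rc: "R x \<in> carrier_mat m m" for x by (simp add: R_def)
  have R1: "R \<one> = 1\<^sub>m m"
    by (rule eq_matI, auto simp: R_def ec einj)
  have Rmult: "R (x \<otimes> y) = R x * R y" if x: "x \<in> carrier G" and y: "y \<in> carrier G" for x y
  proof (rule eq_matI)
    fix i l assume "i < dim_row (R x * R y)" "l < dim_col (R x * R y)"
    hence i: "i < m" and l: "l < m" by (auto simp: R_def)
    obtain j0 where j0: "j0 < m" "\<forall>j<m. (e j = y \<otimes> e l) \<longleftrightarrow> (j = j0)"
      using bij_idx[OF e, of "y \<otimes> e l"] y ec[OF l] by auto
    have "(R x * R y) $$ (i,l) = (\<Sum>j<m. R x $$ (i,j) * R y $$ (j,l))"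
      by (rule mat_mult_entry[OF Rc Rc i l])
    also have "\<dots> = (\<Sum>j<m. if j = j0 then (if e i = x \<otimes> e j then 1 else 0) else 0)"
      by (rule sum.cong, simp, use i l j0 in \<open>auto simp: R_def\<close>)
    also have "\<dots> = (if e i = x \<otimes> e j0 then 1 else 0)" using j0 by simp
    also have "\<dots> = R (x \<otimes> y) $$ (i,l)"
      using i l j0 x y ec by (auto simp: R_def m_assoc)
    finally show "R (x \<otimes> y) $$ (i,l) = (R x * R y) $$ (i,l)" by simp
  qed (auto simp: R_def)
  have Runit: "unitary m (R x)" if x: "x \<in> carrier G" for x
    unfolding unitary_def
  proof (intro conjI Rc eq_matI)
    fix i l assume "i < dim_row (1\<^sub>m m :: complex mat)" "l < dim_col (1\<^sub>m m :: complex mat)"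
    hence i: "i < m" and l: "l < m" by auto
    obtain j0 where j0: "j0 < m" "\<forall>j<m. (e j = x \<otimes> e i) \<longleftrightarrow> (j = j0)"
      using bij_idx[OF e, of "x \<otimes> e i"] x ec[OF i] by auto
    have "(adj (R x) * R x) $$ (i,l) = (\<Sum>j<m. adj (R x) $$ (i,j) * R x $$ (j,l))"
      by (rule mat_mult_entry[OF adj_carrier[OF Rc] Rc i l])
    also have "\<dots> = (\<Sum>j<m. if j = j0 then (if e j = x \<otimes> e l then 1 else 0) else 0)"
      by (rule sum.cong, simp, use i l j0 in \<open>auto simp: R_def\<close>)
    also have "\<dots> = (if x \<otimes> e i = x \<otimes> e l then 1 else 0)"
    proof -
      have ej0: "e j0 = x \<otimes> e i" using j0 by auto
      show ?thesis using j0(1) by (simp add: ej0)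
    qed
    also have "\<dots> = (1\<^sub>m m :: complex mat) $$ (i,l)"
      using i l x ec einj by auto
    finally show "(adj (R x) * R x) $$ (i,l) = (1\<^sub>m m :: complex mat) $$ (i,l)" .
  qed (auto simp: R_def)
  have Rone: "x = \<one>" if x: "x \<in> carrier G" and R: "R x = 1\<^sub>m m" for x
  proof -
    have "R x $$ (0,0) = 1" using R m by simp
    hence "e 0 = x \<otimes> e 0" using m by (simp add: R_def split: if_splits)
    thus ?thesis using x ec[OF m] by (metis l_one one_closed r_cancel_one')
  qed
  have "urep G m R" unfolding urep_def is_rep_def using m Rc R1 Rmult Runit by auto
  thus ?thesis using Rone by blast
qed

end

lemma hom_urep:
  assumes G: "group G" and H: "group H" and pi: "\<pi> \<in> hom G H" and R: "urep H m R"
  shows "urep G m (R \<circ> \<pi>)"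
proof -
  have pc: "\<And>x. x \<in> carrier G \<Longrightarrow> \<pi> x \<in> carrier H" using pi by (auto simp: hom_def)
  have p1: "\<pi> \<one>\<^bsub>G\<^esub> = \<one>\<^bsub>H\<^esub>" using pi G H by (simp add: group_hom.hom_one group_hom_axioms_def group_hom_def)
  have pm: "\<And>x y. x \<in> carrier G \<Longrightarrow> y \<in> carrier G \<Longrightarrow> \<pi> (x \<otimes>\<^bsub>G\<^esub> y) = \<pi> x \<otimes>\<^bsub>H\<^esub> \<pi> y"
    using pi by (auto simp: hom_def)
  show ?thesis using R pc p1 pm unfolding urep_def is_rep_def by auto
qed

lemma (in group) quotient_urep:
  assumes fin: "finite (carrier G)" and N: "N \<lhd> G"
  shows "\<exists>m R. urep G m R \<and> (\<forall>x\<in>carrier G. R x = 1\<^sub>m m \<longleftrightarrow> x \<in> N)"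
proof -
  interpret N: normal N G by (rule N)
  have H: "group (G Mod N)" by (rule N.factorgroup_is_group)
  have finH: "finite (carrier (G Mod N))"
    using fin by (simp add: carrier_FactGroup)
  obtain m R where R: "urep (G Mod N) m R" and R1: "\<forall>x\<in>carrier (G Mod N). R x = 1\<^sub>m m \<longrightarrow> x = \<one>\<^bsub>G Mod N\<^esub>"
    using group.reg_rep[OF H finH] by auto
  have pi: "(\<lambda>a. N #> a) \<in> hom G (G Mod N)" by (rule N.r_coset_hom_Mod)
  have U: "urep G m (R \<circ> (\<lambda>a. N #> a))" by (rule hom_urep[OF is_group H pi R])
  have "(R \<circ> (\<lambda>a. N #> a)) x = 1\<^sub>m m \<longleftrightarrow> x \<in> N" if x: "x \<in> carrier G" for x
  proof
    assume "(R \<circ> (\<lambda>a. N #> a)) x = 1\<^sub>m m"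
    hence "N #> x = N" using R1 x by (auto simp: carrier_FactGroup)
    moreover have "x \<in> N #> x" using x N.subgroup_axioms by (simp add: rcos_self)
    ultimately show "x \<in> N" by simp
  next
    assume "x \<in> N"
    hence "N #> x = N" by (simp add: N.rcos_const)
    moreover have "R N = 1\<^sub>m m"
      using R rep_one[of "G Mod N" m R] by (simp add: urep_def)
    ultimately show "(R \<circ> (\<lambda>a. N #> a)) x = 1\<^sub>m m" by simp
  qed
  thus ?thesis using U by blast
qed

definition ip :: "complex vec \<Rightarrow> complex vec \<Rightarrow> complex" where
  "ip x y = (\<Sum>i<dim_vec y. x $ i * cnj (y $ i))"

definition onl :: "nat \<Rightarrow> complex vec list \<Rightarrow> bool" where
  "onl m vs \<longleftrightarrow> set vs \<subseteq> carrier_vec m \<and>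
     (\<forall>i<length vs. \<forall>j<length vs. ip (vs ! i) (vs ! j) = (if i = j then 1 else 0))"

fun vsum :: "nat \<Rightarrow> nat \<Rightarrow> (nat \<Rightarrow> complex vec) \<Rightarrow> complex vec" where
  "vsum m 0 f = 0\<^sub>v m"
| "vsum m (Suc k) f = vsum m k f + f k"

lemma vsum_carrier: "(\<And>i. i < k \<Longrightarrow> f i \<in> carrier_vec m) \<Longrightarrow> vsum m k f \<in> carrier_vec m"
  by (induct k) auto

lemma vsum_index: "(\<And>i. i < k \<Longrightarrow> f i \<in> carrier_vec m) \<Longrightarrow> r < m \<Longrightarrow> vsum m k f $ r = (\<Sum>i<k. f i $ r)"
proof (induct k)
  case (Suc k)
  have "f k \<in> carrier_vec m" using Suc by auto
  hence d: "dim_vec (f k) = m" by auto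
  have "vsum m (Suc k) f $ r = vsum m k f $ r + f k $ r"
    using d Suc(3) by simp
  thus ?case using Suc by simp
qed simp

definition subsp :: "nat \<Rightarrow> complex vec set \<Rightarrow> bool" where
  "subsp m W \<longleftrightarrow> W \<subseteq> carrier_vec m \<and> 0\<^sub>v m \<in> W \<and> (\<forall>v \<in> W. \<forall>w \<in> W. v + w \<in> W) \<and> (\<forall>c. \<forall>v \<in> W. c \<cdot>\<^sub>v v \<in> W)"

lemma vsum_in: assumes "subsp m W" "\<And>i. i < k \<Longrightarrow> f i \<in> W" shows "vsum m k f \<in> W"
  using assms by (induct k) (auto simp: subsp_def)

lemma matvec_vsum:
  assumes vs: "set vs \<subseteq> carrier_vec m" and a: "a \<in> carrier_vec (length vs)"
  shows "mat_of_cols m vs *\<^sub>v a = vsum m (length vs) (\<lambda>i. a $ i \<cdot>\<^sub>v vs ! i)"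
proof (rule eq_vecI)
  have c: "\<And>i. i < length vs \<Longrightarrow> a $ i \<cdot>\<^sub>v vs ! i \<in> carrier_vec m" using vs by auto
  have vc: "vsum m (length vs) (\<lambda>i. a $ i \<cdot>\<^sub>v vs ! i) \<in> carrier_vec m"
    by (rule vsum_carrier, rule c)
  show "dim_vec (mat_of_cols m vs *\<^sub>v a) = dim_vec (vsum m (length vs) (\<lambda>i. a $ i \<cdot>\<^sub>v vs ! i))"
    using vc by simp
  fix r assume "r < dim_vec (vsum m (length vs) (\<lambda>i. a $ i \<cdot>\<^sub>v vs ! i))"
  hence r: "r < m" using vc by simp
  have "(mat_of_cols m vs *\<^sub>v a) $ r = (\<Sum>i<length vs. mat_of_cols m vs $$ (r,i) * a $ i)"
    using r a by (simp add: scalar_prod_def atLeast0LessThan row_def)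
  also have "\<dots> = (\<Sum>i<length vs. (a $ i \<cdot>\<^sub>v vs ! i) $ r)"
  proof (rule sum.cong)
    fix i assume "i \<in> {..<length vs}"
    hence i: "i < length vs" by simp
    hence "vs ! i \<in> carrier_vec m" using vs nth_mem[OF i] by blast
    hence "dim_vec (vs ! i) = m" by (rule carrier_vecD)
    thus "mat_of_cols m vs $$ (r,i) * a $ i = (a $ i \<cdot>\<^sub>v vs ! i) $ r"
      using i r by (simp add: mat_of_cols_index mult.commute)
  qed simp
  also have "\<dots> = vsum m (length vs) (\<lambda>i. a $ i \<cdot>\<^sub>v vs ! i) $ r"
    using vsum_index[OF c r] by simp
  finally show "(mat_of_cols m vs *\<^sub>v a) $ r = vsum m (length vs) (\<lambda>i. a $ i \<cdot>\<^sub>v vs ! i) $ r" .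
qed

lemma mat_vec_zero[simp]: "A \<in> carrier_mat n m \<Longrightarrow> A *\<^sub>v 0\<^sub>v m = 0\<^sub>v n"
  by (rule eq_vecI, auto simp: row_def)

lemma matvec_in:
  assumes W: "subsp m W" and vs: "set vs \<subseteq> W" and a: "a \<in> carrier_vec (length vs)"
  shows "mat_of_cols m vs *\<^sub>v a \<in> W"
proof -
  have vc: "set vs \<subseteq> carrier_vec m" using W vs by (auto simp: subsp_def)
  show ?thesis unfolding matvec_vsum[OF vc a]
    by (rule vsum_in[OF W], use W vs nth_mem in \<open>unfold subsp_def, blast\<close>)
qed

lemma adj_cols_mult:
  assumes "onl m vs"
  shows "adj (mat_of_cols m vs) * mat_of_cols m vs = 1\<^sub>m (length vs)"
proof (rule eq_matI)
  fix i j assume "i < dim_row (1\<^sub>m (length vs) :: complex mat)" "j < dim_col (1\<^sub>m (length vs) :: complex mat)"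
  hence i: "i < length vs" and j: "j < length vs" by auto
  have vc: "vs ! i \<in> carrier_vec m" "vs ! j \<in> carrier_vec m" using assms i j by (auto simp: onl_def)
  have "(adj (mat_of_cols m vs) * mat_of_cols m vs) $$ (i,j) = (\<Sum>a<m. cnj (vs ! i $ a) * vs ! j $ a)"
    using i j by (simp add: scalar_prod_def atLeast0LessThan mat_of_cols_index)
  also have "\<dots> = ip (vs ! j) (vs ! i)" using vc by (simp add: ip_def mult.commute)
  also have "\<dots> = (1\<^sub>m (length vs) :: complex mat) $$ (i,j)" using assms i j by (auto simp: onl_def)
  finally show "(adj (mat_of_cols m vs) * mat_of_cols m vs) $$ (i,j) = (1\<^sub>m (length vs) :: complex mat) $$ (i,j)" .
qed auto

lemma adj_cols_vec:
  assumes vs: "set vs \<subseteq> carrier_vec m" and w: "w \<in> carrier_vec m" and i: "i < length vs"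
  shows "(adj (mat_of_cols m vs) *\<^sub>v w) $ i = ip w (vs ! i)"
proof -
  have vc: "vs ! i \<in> carrier_vec m" using vs i by auto
  show ?thesis using i w vc by (simp add: scalar_prod_def atLeast0LessThan mat_of_cols_index ip_def row_def mult.commute)
qed

lemma ip_self_real: "ip x x = complex_of_real (\<Sum>i<dim_vec x. (cmod (x $ i))\<^sup>2)"
  unfolding ip_def of_real_sum by (rule sum.cong, simp, rule complex_norm_square[symmetric])

lemma ip_self_zero: assumes "ip x x = 0" shows "x = 0\<^sub>v (dim_vec x)"
proof -
  have "(\<Sum>i<dim_vec x. (cmod (x $ i))\<^sup>2) = 0" using assms ip_self_real[of x] by (metis of_real_eq_0_iff)
  hence "\<forall>i\<in>{..<dim_vec x}. (cmod (x $ i))\<^sup>2 = 0" by (subst sum_nonneg_eq_0_iff[symmetric], auto)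
  thus ?thesis by (intro eq_vecI, auto)
qed

lemma ip_zero_vec[simp]: "ip (0\<^sub>v n) (0\<^sub>v n) = 0" by (simp add: ip_def)

lemma ip_cnj: "dim_vec x = dim_vec y \<Longrightarrow> ip x y = cnj (ip y x)"
  by (simp add: ip_def mult.commute)

lemma ip_smult: "dim_vec x = dim_vec y \<Longrightarrow> ip (c \<cdot>\<^sub>v x) y = c * ip x y"
  by (simp add: ip_def sum_distrib_left mult.assoc)

lemma ip_smult2: "dim_vec x = dim_vec y \<Longrightarrow> ip x (c \<cdot>\<^sub>v y) = cnj c * ip x y"
  by (simp add: ip_def sum_distrib_left algebra_simps)

lemma onl_take: "onl m vs \<Longrightarrow> onl m (take k vs)"
  unfolding onl_def by (auto dest: in_set_takeD)

lemma onl_length: assumes o: "onl m vs" shows "length vs \<le> m"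
proof (rule ccontr)
  assume "\<not> length vs \<le> m"
  hence lm: "m < length vs" by simp
  define ws where "ws = take m vs"
  define B where "B = mat_of_cols m ws"
  have lw: "length ws = m" using lm by (simp add: ws_def)
  have B: "B \<in> carrier_mat m m" unfolding B_def using mat_of_cols_carrier(1)[of m ws] lw by metis
  have "adj B * B = 1\<^sub>m m" using adj_cols_mult[OF onl_take[OF o, of m]] lw by (simp add: B_def ws_def)
  hence BB: "B * adj B = 1\<^sub>m m" using mat_mult_left_right_inverse[OF adj_carrier[OF B] B] by simp
  define b where "b = vs ! m"
  have bc: "b \<in> carrier_vec m" using o lm by (auto simp: onl_def b_def)
  have wsc: "set ws \<subseteq> carrier_vec m" using o by (auto simp: onl_def ws_def dest: in_set_takeD)
  have z: "adj B *\<^sub>v b = 0\<^sub>v m"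
  proof (rule eq_vecI)
    fix i assume "i < dim_vec (0\<^sub>v m :: complex vec)"
    hence i: "i < m" by simp
    have "(adj B *\<^sub>v b) $ i = ip b (ws ! i)" unfolding B_def by (rule adj_cols_vec[OF wsc bc], use i lw in auto)
    also have "\<dots> = ip (vs ! m) (vs ! i)" using i lw by (simp add: ws_def b_def)
    also have "\<dots> = 0" using o i lm by (auto simp: onl_def)
    finally show "(adj B *\<^sub>v b) $ i = (0\<^sub>v m :: complex vec) $ i" using i by simp
  qed (use B in auto)
  have "b = (B * adj B) *\<^sub>v b" using BB bc by simp
  also have "\<dots> = B *\<^sub>v (adj B *\<^sub>v b)" using B bc by (simp add: assoc_mult_mat_vec[of _ m m _ m])
  also have "\<dots> = 0\<^sub>v m" using z B by simp
  finally have "ip b b = 0" by simp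
  moreover have "ip b b = 1" using o lm by (auto simp: onl_def b_def)
  ultimately show False by simp
qed

lemma sum_split_add: fixes f :: "nat \<Rightarrow> 'a::comm_monoid_add" and k l :: nat
  shows "(\<Sum>a<k + l. f a) = (\<Sum>a<k. f a) + (\<Sum>a<l. f (k + a))"
  by (induct l) (auto simp: add.assoc)

lemma mat_unit_entry: fixes A :: "complex mat" assumes "A \<in> carrier_mat n m" "i < n" "j < m"
  shows "(A *\<^sub>v unit_vec m j) $ i = A $$ (i,j)"
proof -
  have "(A *\<^sub>v unit_vec m j) $ i = (\<Sum>a\<in>{0..<m}. A $$ (i,a) * unit_vec m j $ a)"
    using assms by (simp add: scalar_prod_def row_def)
  also have "\<dots> = (\<Sum>a\<in>{0..<m}. (if a = j then A $$ (i,a) else 0))"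
    by (rule sum.cong, use assms in auto)
  also have "\<dots> = A $$ (i,j)" using assms by simp
  finally show ?thesis .
qed

lemma onl_nil[simp]: "onl m []" by (simp add: onl_def)

lemma onl_appendD2: assumes "onl m (vs @ cs)" shows "onl m cs"
  unfolding onl_def
proof (intro conjI allI impI)
  show "set cs \<subseteq> carrier_vec m" using assms by (auto simp: onl_def)
  fix i j assume i: "i < length cs" and j: "j < length cs"
  have "ip ((vs @ cs) ! (length vs + i)) ((vs @ cs) ! (length vs + j)) = (if length vs + i = length vs + j then 1 else 0)"
    using assms i j unfolding onl_def by (metis add_less_cancel_left length_append)
  thus "ip (cs ! i) (cs ! j) = (if i = j then 1 else 0)" by (simp add: nth_append)
qed

lemma onl_appendD1: assumes "onl m (vs @ cs)" shows "onl m vs"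
  using onl_take[OF assms, of "length vs"] by simp

lemma ext_core:
  assumes o: "onl m vs" and u: "u \<in> carrier_vec m"
    and ne: "mat_of_cols m vs *\<^sub>v (adj (mat_of_cols m vs) *\<^sub>v u) \<noteq> u"
  shows "\<exists>c. onl m (vs @ [c \<cdot>\<^sub>v (u + (-1) \<cdot>\<^sub>v (mat_of_cols m vs *\<^sub>v (adj (mat_of_cols m vs) *\<^sub>v u)))])"
proof -
  define k where "k = length vs"
  define B where "B = mat_of_cols m vs"
  have B: "B \<in> carrier_mat m k" by (simp add: B_def k_def)
  have vsc: "set vs \<subseteq> carrier_vec m" using o by (simp add: onl_def)
  have BB: "adj B * B = 1\<^sub>m k" using adj_cols_mult[OF o] by (simp add: B_def k_def)
  define a where "a = adj B *\<^sub>v u"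
  have adjB: "adj B \<in> carrier_mat k m" using B by simp
  have a: "a \<in> carrier_vec k" using adjB u by (simp add: a_def)
  define p where "p = B *\<^sub>v a"
  have p: "p \<in> carrier_vec m" using B a by (simp add: p_def)
  define v0 where "v0 = u + (-1) \<cdot>\<^sub>v p"
  have v0: "v0 \<in> carrier_vec m" using u p by (simp add: v0_def)
  have Bp: "adj B *\<^sub>v p = a" unfolding p_def using B a BB
    by (simp add: assoc_mult_mat_vec[symmetric, of _ k m _ k])
  have Bv0: "adj B *\<^sub>v v0 = 0\<^sub>v k"
  proof -
    have "adj B *\<^sub>v v0 = adj B *\<^sub>v u + adj B *\<^sub>v ((-1) \<cdot>\<^sub>v p)"
      unfolding v0_def using B u p by (simp add: mult_add_distrib_mat_vec[of _ k m])
    also have "\<dots> = a + (-1) \<cdot>\<^sub>v a" using mult_mat_vec[of "adj B" k m p "-1"] B p Bp by (simp add: a_def)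
    also have "\<dots> = 0\<^sub>v k" using a by (intro eq_vecI, auto)
    finally show ?thesis .
  qed
  have v0ne: "v0 \<noteq> 0\<^sub>v m"
  proof
    assume "v0 = 0\<^sub>v m"
    hence z: "u + (-1) \<cdot>\<^sub>v p = 0\<^sub>v m" by (simp add: v0_def)
    have "u $ i = p $ i" if i: "i < m" for i
    proof -
      have "(u + (-1) \<cdot>\<^sub>v p) $ i = 0" using z i by simp
      thus ?thesis using u p i by simp
    qed
    hence "u = p" using u p by (intro eq_vecI, auto)
    thus False using ne by (simp add: p_def a_def B_def)
  qed
  have ipv0: "ip v0 v0 \<noteq> 0" using ip_self_zero[of v0] v0ne v0 by auto
  define s where "s = (\<Sum>i<dim_vec v0. (cmod (v0 $ i))\<^sup>2)"
  have s: "ip v0 v0 = complex_of_real s" by (simp add: s_def ip_self_real)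
  have s0: "s > 0" using ipv0 s by (metis less_eq_real_def of_real_0 s_def sum_nonneg zero_le_power2)
  define c where "c = complex_of_real (1 / sqrt s)"
  define v where "v = c \<cdot>\<^sub>v v0"
  have v: "v \<in> carrier_vec m" using v0 by (simp add: v_def)
  have ipvv: "ip v v = 1"
  proof -
    have "ip v v = c * cnj c * ip v0 v0" unfolding v_def using v0
      by (simp add: ip_smult ip_smult2 mult.assoc)
    also have "\<dots> = complex_of_real (1 / sqrt s) * complex_of_real (1 / sqrt s) * complex_of_real s"
      by (simp only: c_def s complex_cnj_complex_of_real)
    also have "\<dots> = complex_of_real (1 / sqrt s * (1 / sqrt s) * s)" by (simp only: of_real_mult)
    also have "\<dots> = 1"
    proof -
      have "sqrt s * sqrt s = s" using s0 by simp
      hence "1 / sqrt s * (1 / sqrt s) * s = 1" using s0 by (simp add: field_simps)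
      thus ?thesis by simp
    qed
    finally show ?thesis .
  qed
  have ipvi: "ip v (vs ! i) = 0" if i: "i < k" for i
  proof -
    have vi: "vs ! i \<in> carrier_vec m" using vsc i by (auto simp: k_def)
    have "ip v0 (vs ! i) = (adj B *\<^sub>v v0) $ i" unfolding B_def
      by (rule adj_cols_vec[OF vsc v0, symmetric], use i in \<open>simp add: k_def\<close>)
    also have "\<dots> = 0" using Bv0 i by simp
    finally show ?thesis unfolding v_def using v0 vi by (simp add: ip_smult)
  qed
  have ipiv: "ip (vs ! i) v = 0" if i: "i < k" for i
  proof -
    have vi: "vs ! i \<in> carrier_vec m" using vsc i by (auto simp: k_def)
    show ?thesis using ip_cnj[of "vs ! i" v] ipvi[OF i] vi v by simp
  qed
  have "onl m (vs @ [v])"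
    unfolding onl_def
  proof (intro conjI allI impI)
    show "set (vs @ [v]) \<subseteq> carrier_vec m" using vsc v by auto
    fix i j assume i: "i < length (vs @ [v])" and j: "j < length (vs @ [v])"
    show "ip ((vs @ [v]) ! i) ((vs @ [v]) ! j) = (if i = j then 1 else 0)"
    proof (cases "i < k")
      case True
      show ?thesis
      proof (cases "j < k")
        case True
        thus ?thesis using \<open>i < k\<close> o by (simp add: nth_append onl_def k_def)
      next
        case False
        hence "j = k" using j by (simp add: k_def)
        thus ?thesis using \<open>i < k\<close> ipiv by (simp add: nth_append k_def)
      qed
    next
      case False
      hence ik: "i = k" using i by (simp add: k_def)
      show ?thesis
      proof (cases "j < k")
        case True
        thus ?thesis using ik ipvi by (simp add: nth_append k_def)
      next
        case False
        hence "j = k" using j by (simp add: k_def)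
        thus ?thesis using ik ipvv by (simp add: nth_append k_def)
      qed
    qed
  qed
  thus ?thesis unfolding v_def v0_def p_def a_def B_def by blast
qed

lemma ext_exists:
  assumes o: "onl m vs" and l: "length vs < m"
  shows "\<exists>u\<in>carrier_vec m. mat_of_cols m vs *\<^sub>v (adj (mat_of_cols m vs) *\<^sub>v u) \<noteq> u"
proof (rule ccontr)
  assume "\<not> ?thesis"
  hence all: "\<And>u. u \<in> carrier_vec m \<Longrightarrow> mat_of_cols m vs *\<^sub>v (adj (mat_of_cols m vs) *\<^sub>v u) = u" by auto
  define k where "k = length vs"
  define B where "B = mat_of_cols m vs"
  have B: "B \<in> carrier_mat m k" by (simp add: B_def k_def)
  have BB: "adj B * B = 1\<^sub>m k" using adj_cols_mult[OF o] by (simp add: B_def k_def)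
  have P: "B * adj B = 1\<^sub>m m"
  proof (rule eq_matI)
    fix i j assume "i < dim_row (1\<^sub>m m :: complex mat)" "j < dim_col (1\<^sub>m m :: complex mat)"
    hence i: "i < m" and j: "j < m" by auto
    have "(B * adj B) $$ (i,j) = ((B * adj B) *\<^sub>v unit_vec m j) $ i"
      using B i j by (simp add: mat_unit_entry[of _ m m])
    also have "\<dots> = unit_vec m j $ i" using all[of "unit_vec m j"] B by (simp add: B_def assoc_mult_mat_vec[of _ m k _ m])
    finally show "(B * adj B) $$ (i,j) = (1\<^sub>m m :: complex mat) $$ (i,j)" using i j by simp
  qed (use B in auto)
  have "of_nat m = mat_trace (B * adj B)" using P by simp
  also have "\<dots> = mat_trace (adj B * B)" by (rule trace_comm[OF B adj_carrier[OF B]])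
  also have "\<dots> = of_nat k" using BB by simp
  finally have "m = k" by simp
  thus False using l by (simp add: k_def)
qed

lemma max_onl_in:
  assumes W: "subsp m W"
  shows "\<exists>vs. onl m vs \<and> set vs \<subseteq> W \<and> (\<forall>w\<in>W. mat_of_cols m vs *\<^sub>v (adj (mat_of_cols m vs) *\<^sub>v w) = w)"
proof -
  define P where "P k = (\<exists>vs. onl m vs \<and> set vs \<subseteq> W \<and> length vs = k)" for k
  have P0: "P 0" by (auto simp: P_def)
  have bound: "\<forall>y. P y \<longrightarrow> y \<le> m" using onl_length by (auto simp: P_def)
  obtain k where k: "P k" and kmax: "\<forall>y. P y \<longrightarrow> y \<le> k" using Nat.ex_has_greatest_nat[OF P0 bound] by auto
  obtain vs where vs: "onl m vs" "set vs \<subseteq> W" "length vs = k" using k by (auto simp: P_def)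
  have "mat_of_cols m vs *\<^sub>v (adj (mat_of_cols m vs) *\<^sub>v w) = w" if w: "w \<in> W" for w
  proof (rule ccontr)
    assume ne: "mat_of_cols m vs *\<^sub>v (adj (mat_of_cols m vs) *\<^sub>v w) \<noteq> w"
    have wc: "w \<in> carrier_vec m" using W w by (auto simp: subsp_def)
    obtain c where c: "onl m (vs @ [c \<cdot>\<^sub>v (w + (-1) \<cdot>\<^sub>v (mat_of_cols m vs *\<^sub>v (adj (mat_of_cols m vs) *\<^sub>v w)))])"
      using ext_core[OF vs(1) wc ne] by blast
    have ac: "adj (mat_of_cols m vs) \<in> carrier_mat (length vs) m"
      using adj_carrier[OF mat_of_cols_carrier(1)[of m vs]] .
    have "adj (mat_of_cols m vs) *\<^sub>v w \<in> carrier_vec (length vs)"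
      using mult_mat_vec_carrier[OF ac wc] .
    hence pin: "mat_of_cols m vs *\<^sub>v (adj (mat_of_cols m vs) *\<^sub>v w) \<in> W"
      by (rule matvec_in[OF W vs(2)])
    have "c \<cdot>\<^sub>v (w + (-1) \<cdot>\<^sub>v (mat_of_cols m vs *\<^sub>v (adj (mat_of_cols m vs) *\<^sub>v w))) \<in> W"
      using W w pin unfolding subsp_def by blast
    hence "P (Suc k)" using c vs unfolding P_def
      by (intro exI[of _ "vs @ [c \<cdot>\<^sub>v (w + (-1) \<cdot>\<^sub>v (mat_of_cols m vs *\<^sub>v (adj (mat_of_cols m vs) *\<^sub>v w)))]"]) auto
    thus False using kmax by auto
  qed
  thus ?thesis using vs by blast
qed

lemma complete_onl:
  assumes o: "onl m vs"
  shows "\<exists>cs. onl m (vs @ cs) \<and> length (vs @ cs) = m"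
proof -
  define P where "P k = (\<exists>cs. onl m (vs @ cs) \<and> length (vs @ cs) = k)" for k
  have P0: "P (length vs)" using o by (auto simp: P_def intro: exI[of _ "[]"])
  have bound: "\<forall>y. P y \<longrightarrow> y \<le> m" unfolding P_def by (metis onl_length)
  obtain k where k: "P k" and kmax: "\<forall>y. P y \<longrightarrow> y \<le> k" using Nat.ex_has_greatest_nat[OF P0 bound] by auto
  obtain cs where cs: "onl m (vs @ cs)" "length (vs @ cs) = k" using k by (auto simp: P_def)
  have "k \<le> m" using bound k by auto
  moreover have "\<not> k < m"
  proof
    assume "k < m"
    then obtain u where u: "u \<in> carrier_vec m"
      and ne: "mat_of_cols m (vs @ cs) *\<^sub>v (adj (mat_of_cols m (vs @ cs)) *\<^sub>v u) \<noteq> u"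
      using ext_exists[OF cs(1)] cs(2) by auto
    obtain v where "onl m ((vs @ cs) @ [v])" using ext_core[OF cs(1) u ne] by blast
    hence "P (Suc k)" using cs unfolding P_def by (intro exI[of _ "cs @ [v]"]) auto
    thus False using kmax by auto
  qed
  ultimately show ?thesis using cs by auto
qed

lemma split_lemma:
  assumes Rc: "\<And>x. x \<in> carrier G \<Longrightarrow> R x \<in> carrier_mat m m"
    and W: "invariant_subspace G m R W" and W0: "W \<noteq> {0\<^sub>v m}" and Wall: "W \<noteq> carrier_vec m"
  shows "\<exists>k B C. 0 < k \<and> k < m \<and> B \<in> carrier_mat m k \<and> C \<in> carrier_mat m (m - k) \<and>
    adj B * B = 1\<^sub>m k \<and> adj C * C = 1\<^sub>m (m - k) \<and> B * adj B + C * adj C = 1\<^sub>m m \<and>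
    (\<forall>x\<in>carrier G. adj C * R x * B = 0\<^sub>m (m - k) k)"
proof -
  have sub: "subsp m W" using W by (auto simp: invariant_subspace_def subsp_def)
  have Winv: "\<And>x v. x \<in> carrier G \<Longrightarrow> v \<in> W \<Longrightarrow> R x *\<^sub>v v \<in> W"
    using W by (auto simp: invariant_subspace_def)
  have Wc: "W \<subseteq> carrier_vec m" using sub by (simp add: subsp_def)
  obtain vs where vs: "onl m vs" "set vs \<subseteq> W"
    and proj: "\<And>w. w \<in> W \<Longrightarrow> mat_of_cols m vs *\<^sub>v (adj (mat_of_cols m vs) *\<^sub>v w) = w"
    using max_onl_in[OF sub] by blast
  obtain cs where cs: "onl m (vs @ cs)" "length (vs @ cs) = m" using complete_onl[OF vs(1)] by blast
  define k where "k = length vs"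
  define l where "l = length cs"
  have lk: "l = m - k" "m = k + l" using cs(2) by (auto simp: k_def l_def)
  define B where "B = mat_of_cols m vs"
  define C where "C = mat_of_cols m cs"
  define U where "U = mat_of_cols m (vs @ cs)"
  have B: "B \<in> carrier_mat m k" by (simp add: B_def k_def)
  have C: "C \<in> carrier_mat m l" by (simp add: C_def l_def)
  have U: "U \<in> carrier_mat m m" using cs(2) unfolding U_def by (metis mat_of_cols_carrier(1))
  have vsc: "set vs \<subseteq> carrier_vec m" and csc: "set cs \<subseteq> carrier_vec m"
    using cs(1) by (auto simp: onl_def)
  have BB: "adj B * B = 1\<^sub>m k" using adj_cols_mult[OF vs(1)] by (simp add: B_def k_def)
  have CC: "adj C * C = 1\<^sub>m l" using adj_cols_mult[OF onl_appendD2[OF cs(1)]] by (simp add: C_def l_def)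
  have UU: "adj U * U = 1\<^sub>m m" using adj_cols_mult[OF cs(1)] cs(2) by (simp add: U_def)
  hence UU': "U * adj U = 1\<^sub>m m" using mat_mult_left_right_inverse[OF adj_carrier[OF U] U] by simp
  have sumUU: "B * adj B + C * adj C = U * adj U"
  proof (rule eq_matI)
    fix i j assume "i < dim_row (U * adj U)" "j < dim_col (U * adj U)"
    hence i: "i < m" and j: "j < m" using U by auto
    define f where "f a = (vs @ cs) ! a $ i * cnj ((vs @ cs) ! a $ j)" for a
    have "(B * adj B) $$ (i,j) = (\<Sum>a<k. B $$ (i,a) * adj B $$ (a,j))"
      by (rule mat_mult_entry[OF B adj_carrier[OF B] i j])
    also have "\<dots> = (\<Sum>a<k. f a)"
      by (rule sum.cong, simp, use i j in \<open>simp add: B_def k_def mat_of_cols_index f_def nth_append\<close>)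
    finally have e1: "(B * adj B) $$ (i,j) = (\<Sum>a<k. f a)" .
    have "(C * adj C) $$ (i,j) = (\<Sum>a<l. C $$ (i,a) * adj C $$ (a,j))"
      by (rule mat_mult_entry[OF C adj_carrier[OF C] i j])
    also have "\<dots> = (\<Sum>a<l. f (k + a))"
      by (rule sum.cong, simp, use i j in \<open>simp add: C_def l_def k_def mat_of_cols_index f_def nth_append\<close>)
    finally have e2: "(C * adj C) $$ (i,j) = (\<Sum>a<l. f (k + a))" .
    have "(U * adj U) $$ (i,j) = (\<Sum>a<m. U $$ (i,a) * adj U $$ (a,j))"
      by (rule mat_mult_entry[OF U adj_carrier[OF U] i j])
    also have "\<dots> = (\<Sum>a<m. f a)"
      by (rule sum.cong, simp, use i j cs(2) in \<open>simp add: U_def mat_of_cols_index f_def\<close>)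
    also have "\<dots> = (\<Sum>a<k. f a) + (\<Sum>a<l. f (k + a))"
      using sum_split_add[of f k l] lk(2) by simp
    finally have e3: "(U * adj U) $$ (i,j) = (\<Sum>a<k. f a) + (\<Sum>a<l. f (k + a))" .
    have "(B * adj B + C * adj C) $$ (i,j) = (B * adj B) $$ (i,j) + (C * adj C) $$ (i,j)"
      using i j B C by simp
    thus "(B * adj B + C * adj C) $$ (i,j) = (U * adj U) $$ (i,j)" using e1 e2 e3 by simp
  qed (use B C U in auto)
  have sum1: "B * adj B + C * adj C = 1\<^sub>m m" using sumUU UU' by simp
  have k0: "0 < k"
  proof (rule ccontr)
    assume "\<not> 0 < k"
    hence k0: "k = 0" by simp
    obtain w where w: "w \<in> W" "w \<noteq> 0\<^sub>v m" using W0 sub by (auto simp: subsp_def)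
    have wc: "w \<in> carrier_vec m" using w Wc by auto
    have "B *\<^sub>v (adj B *\<^sub>v w) = 0\<^sub>v m"
      using B k0 by (intro eq_vecI, auto simp: scalar_prod_def)
    thus False using proj[OF w(1)] w(2) by (simp add: B_def)
  qed
  have km: "k < m"
  proof (rule ccontr)
    assume "\<not> k < m"
    hence km: "k = m" using lk by arith
    have B': "B \<in> carrier_mat m m" using B km by (simp only:)
    have "adj B * B = 1\<^sub>m m" using BB km by (simp only:)
    hence BB': "B * adj B = 1\<^sub>m m" by (rule mat_mult_left_right_inverse[OF adj_carrier[OF B'] B'])
    have lvs: "length vs = m" using km by (simp add: k_def)
    have "carrier_vec m \<subseteq> W"
    proof
      fix u :: "complex vec" assume u: "u \<in> carrier_vec m"
      have "u = (B * adj B) *\<^sub>v u" using BB' u by simp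
      also have "\<dots> = B *\<^sub>v (adj B *\<^sub>v u)" by (rule assoc_mult_mat_vec[OF B' adj_carrier[OF B'] u])
      also have "\<dots> \<in> W"
      proof -
        have "adj B *\<^sub>v u \<in> carrier_vec m" by (rule mult_mat_vec_carrier[OF adj_carrier[OF B'] u])
        hence "adj B *\<^sub>v u \<in> carrier_vec (length vs)" using lvs by (simp only:)
        thus ?thesis unfolding B_def by (rule matvec_in[OF sub vs(2)])
      qed
      finally show "u \<in> W" .
    qed
    thus False using Wall Wc by auto
  qed
  have CB: "adj C * B = 0\<^sub>m l k"
  proof (rule eq_matI)
    fix i j assume "i < dim_row (0\<^sub>m l k :: complex mat)" "j < dim_col (0\<^sub>m l k :: complex mat)"
    hence i: "i < l" and j: "j < k" by auto
    have vj: "vs ! j \<in> carrier_vec m" using vsc j by (auto simp: k_def)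
    have "(adj C * B) $$ (i,j) = (\<Sum>a<m. cnj (cs ! i $ a) * vs ! j $ a)"
      using mat_mult_entry[OF adj_carrier[OF C] B i j] i j by (simp add: C_def B_def l_def k_def mat_of_cols_index)
    also have "\<dots> = ip (vs ! j) (cs ! i)"
    proof -
      have "cs ! i \<in> carrier_vec m" using csc nth_mem[of i cs] i by (simp add: l_def subset_iff)
      hence "dim_vec (cs ! i) = m" by (rule carrier_vecD)
      thus ?thesis by (simp add: ip_def mult.commute)
    qed
    also have "\<dots> = ip ((vs @ cs) ! j) ((vs @ cs) ! (k + i))"
      using i j by (simp add: nth_append k_def)
    also have "\<dots> = 0"
    proof -
      have "j < length (vs @ cs)" "k + i < length (vs @ cs)" using i j by (auto simp: k_def l_def)
      hence eq: "ip ((vs @ cs) ! j) ((vs @ cs) ! (k + i)) = (if j = k + i then 1 else 0)"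
        using cs(1) unfolding onl_def by blast
      have "j \<noteq> k + i" using j by simp
      thus ?thesis using eq by simp
    qed
    finally show "(adj C * B) $$ (i,j) = (0\<^sub>m l k :: complex mat) $$ (i,j)" using i j by simp
  qed (use B C in auto)
  have Z: "adj C * R x * B = 0\<^sub>m l k" if x: "x \<in> carrier G" for x
  proof -
    have Rx: "R x \<in> carrier_mat m m" using Rc[OF x] .
    define M where "M = adj B * (R x * B)"
    have M: "M \<in> carrier_mat k k" unfolding M_def
      by (rule mult_carrier_mat[OF adj_carrier[OF B] mult_carrier_mat[OF Rx B]])
    have RB: "R x * B = B * M"
    proof (rule mat_col_eqI)
      fix j assume "j < dim_col (B * M)"
      hence j: "j < k" using B M by simp
      have vj: "vs ! j \<in> W" using vs(2) j by (auto simp: k_def)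
      have vjc: "vs ! j \<in> carrier_vec m" using vsc j by (auto simp: k_def)
      have cB: "col B j = vs ! j" using j vjc by (simp add: B_def k_def)
      have "col (R x * B) j = R x *\<^sub>v vs ! j" using Rx B j cB by simp
      also have "\<dots> = B *\<^sub>v (adj B *\<^sub>v (R x *\<^sub>v vs ! j))" using proj[OF Winv[OF x vj]] by (simp add: B_def)
      also have "\<dots> = col (B * M) j"
        using B Rx M j cB by (simp add: M_def col_mult2[of _ m k _ k] col_mult2[of _ k m _ k])
      finally show "col (R x * B) j = col (B * M) j" .
    qed (use B Rx M in auto)
    have "adj C * R x * B = adj C * (R x * B)" using C Rx B by (simp add: assoc_mult_mat[of _ l m _ m _ k])
    also have "\<dots> = adj C * (B * M)" using RB by simp
    also have "\<dots> = (adj C * B) * M" using C B M by (simp add: assoc_mult_mat[of _ l m _ k _ k])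
    also have "\<dots> = 0\<^sub>m l k" using CB M by simp
    finally show ?thesis .
  qed
  show ?thesis
    by (rule exI[of _ k], rule exI[of _ B], rule exI[of _ C], use k0 km B C BB CC sum1 Z lk(1) in auto)
qed

context group begin

lemma compress:
  assumes R: "urep G m R" and B: "B \<in> carrier_mat m k" and C: "C \<in> carrier_mat m l"
    and BB: "adj B * B = 1\<^sub>m k" and S: "B * adj B + C * adj C = 1\<^sub>m m"
    and Z: "\<And>x. x \<in> carrier G \<Longrightarrow> adj C * R x * B = 0\<^sub>m l k" and k: "0 < k"
  shows "urep G k (\<lambda>x. adj B * R x * B)"
    and "\<And>x. x \<in> carrier G \<Longrightarrow> R x * B = B * (adj B * R x * B)"
proof -
  have rep: "is_rep G m R" using R by (simp add: urep_def)
  have Rc: "\<And>x. x \<in> carrier G \<Longrightarrow> R x \<in> carrier_mat m m" using rep by (simp add: rep_carrier)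
  have aB: "adj B \<in> carrier_mat k m" using B by simp
  have aC: "adj C \<in> carrier_mat l m" using C by simp
  define \<rho> where "\<rho> x = adj B * R x * B" for x
  have \<rho>c: "\<rho> x \<in> carrier_mat k k" if x: "x \<in> carrier G" for x
    unfolding \<rho>_def by (rule mult_carrier_mat[OF mult_carrier_mat[OF aB Rc[OF x]] B])
  have inter: "R x * B = B * \<rho> x" if x: "x \<in> carrier G" for x
  proof -
    have Rx: "R x \<in> carrier_mat m m" by (rule Rc[OF x])
    have RxB: "R x * B \<in> carrier_mat m k" using Rx B by simp
    have BaB: "B * adj B \<in> carrier_mat m m" using B aB by simp
    have CaC: "C * adj C \<in> carrier_mat m m" using C aC by simp
    have "R x * B = 1\<^sub>m m * (R x * B)" by (rule left_mult_one_mat[OF RxB, symmetric])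
    also have "\<dots> = (B * adj B + C * adj C) * (R x * B)" using S by simp
    also have "\<dots> = B * adj B * (R x * B) + C * adj C * (R x * B)"
      by (rule add_mult_distrib_mat[OF BaB CaC RxB])
    also have "B * adj B * (R x * B) = B * \<rho> x"
    proof -
      have "B * adj B * (R x * B) = B * (adj B * (R x * B))" by (rule assoc_mult_mat[OF B aB RxB])
      also have "adj B * (R x * B) = \<rho> x" unfolding \<rho>_def by (rule assoc_mult_mat[OF aB Rx B, symmetric])
      finally show ?thesis .
    qed
    also have "C * adj C * (R x * B) = 0\<^sub>m m k"
    proof -
      have "C * adj C * (R x * B) = C * (adj C * (R x * B))" by (rule assoc_mult_mat[OF C aC RxB])
      also have "adj C * (R x * B) = adj C * R x * B" by (rule assoc_mult_mat[OF aC Rx B, symmetric])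
      also have "\<dots> = 0\<^sub>m l k" by (rule Z[OF x])
      finally show ?thesis using C by simp
    qed
    also have "B * \<rho> x + 0\<^sub>m m k = B * \<rho> x" using B \<rho>c[OF x] by simp
    finally show ?thesis .
  qed
  show "\<And>x. x \<in> carrier G \<Longrightarrow> R x * B = B * (adj B * R x * B)" using inter by (simp add: \<rho>_def)
  have mult: "\<rho> (x \<otimes> y) = \<rho> x * \<rho> y" if x: "x \<in> carrier G" and y: "y \<in> carrier G" for x y
  proof -
    have Rx: "R x \<in> carrier_mat m m" by (rule Rc[OF x])
    have Ry: "R y \<in> carrier_mat m m" by (rule Rc[OF y])
    have aBRx: "adj B * R x \<in> carrier_mat k m" using aB Rx by simp
    have "\<rho> (x \<otimes> y) = adj B * (R x * R y) * B" by (simp add: \<rho>_def rep_mult[OF rep x y])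
    also have "adj B * (R x * R y) = (adj B * R x) * R y" by (rule assoc_mult_mat[OF aB Rx Ry, symmetric])
    also have "(adj B * R x) * R y * B = (adj B * R x) * (R y * B)" by (rule assoc_mult_mat[OF aBRx Ry B])
    also have "R y * B = B * \<rho> y" by (rule inter[OF y])
    also have "(adj B * R x) * (B * \<rho> y) = (adj B * R x * B) * \<rho> y"
      by (rule assoc_mult_mat[OF aBRx B \<rho>c[OF y], symmetric])
    finally show ?thesis by (simp add: \<rho>_def)
  qed
  have one: "\<rho> \<one> = 1\<^sub>m k"
  proof -
    have "\<rho> \<one> = adj B * 1\<^sub>m m * B" by (simp add: \<rho>_def rep_one[OF rep])
    also have "adj B * 1\<^sub>m m = adj B" by (rule right_mult_one_mat[OF aB])
    finally show ?thesis using BB by simp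
  qed
  have adjr: "adj (\<rho> x) = \<rho> (inv x)" if x: "x \<in> carrier G" for x
  proof -
    have Rx: "R x \<in> carrier_mat m m" by (rule Rc[OF x])
    have aBRx: "adj B * R x \<in> carrier_mat k m" using aB Rx by simp
    have "adj (\<rho> x) = adj B * adj (adj B * R x)" unfolding \<rho>_def
      by (rule adj_mult, use Rx B in simp)
    also have "adj (adj B * R x) = adj (R x) * B" using adj_mult[of "adj B" "R x"] B Rx by simp
    also have "adj (R x) = R (inv x)" by (rule urep_adj[OF R x])
    also have "adj B * (R (inv x) * B) = \<rho> (inv x)"
      unfolding \<rho>_def by (rule assoc_mult_mat[OF aB Rc[OF inv_closed[OF x]] B, symmetric])
    finally show ?thesis .
  qed
  have "unitary k (\<rho> x)" if x: "x \<in> carrier G" for x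
    unfolding unitary_def
  proof
    show "\<rho> x \<in> carrier_mat k k" by (rule \<rho>c[OF x])
    have "adj (\<rho> x) * \<rho> x = \<rho> (inv x) * \<rho> x" using adjr[OF x] by simp
    also have "\<dots> = \<rho> (inv x \<otimes> x)" using mult[OF inv_closed[OF x] x] by simp
    also have "\<dots> = 1\<^sub>m k" using one x by simp
    finally show "adj (\<rho> x) * \<rho> x = 1\<^sub>m k" .
  qed
  thus "urep G k (\<lambda>x. adj B * R x * B)"
    unfolding urep_def is_rep_def using k \<rho>c mult one by (simp add: \<rho>_def)
qed

end

context group begin

lemma decomp:
  assumes "urep G m R" "g \<in> carrier G" "R g \<noteq> 1\<^sub>m m"
  shows "\<exists>n \<sigma>. irreducible_rep G n \<sigma> \<and> urep G n \<sigma> \<and>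
           (\<forall>x\<in>carrier G. R x = 1\<^sub>m m \<longrightarrow> \<sigma> x = 1\<^sub>m n) \<and> \<sigma> g \<noteq> 1\<^sub>m n"
  using assms
proof (induction m arbitrary: R rule: less_induct)
  case (less m)
  note R = less.prems(1) and g = less.prems(2) and Rg = less.prems(3)
  have rep: "is_rep G m R" using R by (simp add: urep_def)
  show ?case
  proof (cases "irreducible_rep G m R")
    case True
    thus ?thesis using R Rg by blast
  next
    case False
    then obtain W where W: "invariant_subspace G m R W" "W \<noteq> {0\<^sub>v m}" "W \<noteq> carrier_vec m"
      using rep by (auto simp: irreducible_rep_def)
    have Rc: "\<And>x. x \<in> carrier G \<Longrightarrow> R x \<in> carrier_mat m m" using rep by (simp add: rep_carrier)
    obtain k B C where k0: "0 < k" and km: "k < m" and B: "B \<in> carrier_mat m k"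
      and C: "C \<in> carrier_mat m (m - k)" and BB: "adj B * B = 1\<^sub>m k" and CC: "adj C * C = 1\<^sub>m (m - k)"
      and S: "B * adj B + C * adj C = 1\<^sub>m m" and Z: "\<forall>x\<in>carrier G. adj C * R x * B = 0\<^sub>m (m - k) k"
      using split_lemma[OF Rc W] by blast
    define l where "l = m - k"
    have l0: "0 < l" "l < m" using k0 km by (auto simp: l_def)
    have C': "C \<in> carrier_mat m l" using C by (simp add: l_def)
    have CC': "adj C * C = 1\<^sub>m l" using CC by (simp add: l_def)
    have Z1: "\<And>x. x \<in> carrier G \<Longrightarrow> adj C * R x * B = 0\<^sub>m l k" using Z by (simp add: l_def)
    have aB: "adj B \<in> carrier_mat k m" using B by simp
    have aC: "adj C \<in> carrier_mat l m" using C' by simp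
    have Z2: "adj B * R x * C = 0\<^sub>m k l" if x: "x \<in> carrier G" for x
    proof -
      have ix: "inv x \<in> carrier G" using x by simp
      have Ri: "R (inv x) \<in> carrier_mat m m" by (rule Rc[OF ix])
      have Rx: "R x \<in> carrier_mat m m" by (rule Rc[OF x])
      have aCRi: "adj C * R (inv x) \<in> carrier_mat l m" using aC Ri by simp
      have "adj (adj C * R (inv x) * B) = adj B * adj (adj C * R (inv x))"
        by (rule adj_mult, use Ri B in simp)
      also have "adj (adj C * R (inv x)) = adj (R (inv x)) * C" using adj_mult[of "adj C" "R (inv x)"] C' Ri by simp
      also have "adj (R (inv x)) = R x" using urep_adj[OF R ix] x by simp
      also have "adj B * (R x * C) = adj B * R x * C" by (rule assoc_mult_mat[OF aB Rx C', symmetric])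
      finally have "adj B * R x * C = adj (adj C * R (inv x) * B)" by simp
      also have "\<dots> = adj (0\<^sub>m l k)" using Z1[OF ix] by simp
      finally show ?thesis by simp
    qed
    have S': "C * adj C + B * adj B = 1\<^sub>m m"
      using S B C' by (metis comm_add_mat mult_carrier_mat adj_carrier)
    obtain u1: "urep G k (\<lambda>x. adj B * R x * B)" and i1: "\<And>x. x \<in> carrier G \<Longrightarrow> R x * B = B * (adj B * R x * B)"
      using compress[OF R B C' BB S Z1 k0] by blast
    obtain u2: "urep G l (\<lambda>x. adj C * R x * C)" and i2: "\<And>x. x \<in> carrier G \<Longrightarrow> R x * C = C * (adj C * R x * C)"
      using compress[OF R C' B CC' S' Z2 l0(1)] by blast
    have triv1: "adj B * R x * B = 1\<^sub>m k" if "x \<in> carrier G" "R x = 1\<^sub>m m" for x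
      using that aB BB by (simp add: right_mult_one_mat[OF aB])
    have triv2: "adj C * R x * C = 1\<^sub>m l" if "x \<in> carrier G" "R x = 1\<^sub>m m" for x
      using that aC CC' by (simp add: right_mult_one_mat[OF aC])
    show ?thesis
    proof (cases "adj B * R g * B = 1\<^sub>m k")
      case False
      then obtain n \<sigma> where "irreducible_rep G n \<sigma>" "urep G n \<sigma>"
        "\<forall>x\<in>carrier G. adj B * R x * B = 1\<^sub>m k \<longrightarrow> \<sigma> x = 1\<^sub>m n" "\<sigma> g \<noteq> 1\<^sub>m n"
        using less.IH[OF km u1 g] by blast
      thus ?thesis using triv1 by blast
    next
      case T1: True
      show ?thesis
      proof (cases "adj C * R g * C = 1\<^sub>m l")
        case False
        then obtain n \<sigma> where "irreducible_rep G n \<sigma>" "urep G n \<sigma>"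
          "\<forall>x\<in>carrier G. adj C * R x * C = 1\<^sub>m l \<longrightarrow> \<sigma> x = 1\<^sub>m n" "\<sigma> g \<noteq> 1\<^sub>m n"
          using less.IH[OF l0(2) u2 g] by blast
        thus ?thesis using triv2 by blast
      next
        case T2: True
        have Rg': "R g \<in> carrier_mat m m" by (rule Rc[OF g])
        have BaB: "B * adj B \<in> carrier_mat m m" using B aB by simp
        have CaC: "C * adj C \<in> carrier_mat m m" using C' aC by simp
        have "R g = R g * 1\<^sub>m m" by (rule right_mult_one_mat[OF Rg', symmetric])
        also have "\<dots> = R g * (B * adj B + C * adj C)" using S by simp
        also have "\<dots> = R g * (B * adj B) + R g * (C * adj C)"
          by (rule mult_add_distrib_mat[OF Rg' BaB CaC])
        also have "R g * (B * adj B) = B * adj B"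
        proof -
          have "R g * (B * adj B) = R g * B * adj B" by (rule assoc_mult_mat[OF Rg' B aB, symmetric])
          also have "R g * B = B" using i1[OF g] T1 B by simp
          finally show ?thesis .
        qed
        also have "R g * (C * adj C) = C * adj C"
        proof -
          have "R g * (C * adj C) = R g * C * adj C" by (rule assoc_mult_mat[OF Rg' C' aC, symmetric])
          also have "R g * C = C" using i2[OF g] T2 C' by simp
          finally show ?thesis .
        qed
        finally have "R g = 1\<^sub>m m" using S by simp
        thus ?thesis using Rg by simp
      qed
    qed
  qed
qed

end

lemma one_mat_comm: "A \<in> carrier_mat 1 1 \<Longrightarrow> B \<in> carrier_mat 1 1 \<Longrightarrow> A * B = B * (A :: complex mat)"
  by (rule eq_matI, auto simp: scalar_prod_def)

context group begin

lemma exists_irr: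
  assumes fin: "finite (carrier G)" and N: "N \<lhd> G" and g: "g \<in> carrier G" "g \<notin> N"
  shows "\<exists>n \<sigma>. irreducible_rep G n \<sigma> \<and> urep G n \<sigma> \<and> (\<forall>x\<in>N. \<sigma> x = 1\<^sub>m n) \<and> \<sigma> g \<noteq> 1\<^sub>m n"
proof -
  obtain m R where R: "urep G m R" and Rk: "\<forall>x\<in>carrier G. R x = 1\<^sub>m m \<longleftrightarrow> x \<in> N"
    using quotient_urep[OF fin N] by blast
  have Nc: "N \<subseteq> carrier G" using normal_imp_subgroup[OF N] subgroup.subset by blast
  have "R g \<noteq> 1\<^sub>m m" using Rk g by auto
  then obtain n \<sigma> where "irreducible_rep G n \<sigma>" "urep G n \<sigma>"
    "\<forall>x\<in>carrier G. R x = 1\<^sub>m m \<longrightarrow> \<sigma> x = 1\<^sub>m n" "\<sigma> g \<noteq> 1\<^sub>m n"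
    using decomp[OF R g(1)] by blast
  thus ?thesis using Rk Nc by blast
qed

lemma one_dim:
  assumes rep: "is_rep G 1 \<sigma>" and x: "x \<in> carrier G" and y: "y \<in> carrier G"
  shows "\<sigma> (x \<otimes> y \<otimes> inv (y \<otimes> x)) = 1\<^sub>m 1"
proof -
  have "\<sigma> (x \<otimes> y) = \<sigma> x * \<sigma> y" using rep_mult[OF rep x y] .
  also have "\<dots> = \<sigma> y * \<sigma> x" by (rule one_mat_comm[OF rep_carrier[OF rep x] rep_carrier[OF rep y]])
  also have "\<dots> = \<sigma> (y \<otimes> x)" using rep_mult[OF rep y x] by simp
  finally have e: "\<sigma> (x \<otimes> y) = \<sigma> (y \<otimes> x)" .
  have "\<sigma> (x \<otimes> y \<otimes> inv (y \<otimes> x)) = \<sigma> (x \<otimes> y) * \<sigma> (inv (y \<otimes> x))"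
    using rep_mult[OF rep] x y by simp
  also have "\<dots> = \<sigma> (y \<otimes> x) * \<sigma> (inv (y \<otimes> x))" using e by simp
  also have "\<dots> = 1\<^sub>m 1" using rep_inv_right[OF rep] x y by simp
  finally show ?thesis .
qed

lemma char_val: "g \<in> carrier G \<Longrightarrow> character G \<rho> g = mat_trace (\<rho> g)"
  by (simp add: character_def)

lemma irr_in_Irr: "irreducible_rep G n \<rho> \<Longrightarrow> character G \<rho> \<in> Irr G"
  unfolding Irr_def by blast

lemma irr_deg: assumes "irreducible_rep G n \<rho>" shows "character G \<rho> \<one> = of_nat n"
proof -
  have "\<rho> \<one> = 1\<^sub>m n" using assms rep_one by (auto simp: irreducible_rep_def)
  thus ?thesis by (simp add: character_def)
qed

lemma irr_in_cd: "irreducible_rep G n \<rho> \<Longrightarrow> of_nat n \<in> cd G"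
  unfolding cd_def using irr_in_Irr irr_deg by (metis (mono_tags, lifting) mem_Collect_eq)

lemma triv_irr: "irreducible_rep G 1 (\<lambda>_. 1\<^sub>m 1)"
  unfolding irreducible_rep_def
proof (intro conjI allI impI)
  show "is_rep G 1 (\<lambda>_. 1\<^sub>m 1)" by (simp add: is_rep_def)
  fix W assume W: "invariant_subspace G 1 (\<lambda>_. 1\<^sub>m 1) W"
  show "W = {0\<^sub>v 1} \<or> W = carrier_vec 1"
  proof (cases "W = {0\<^sub>v 1}")
    case False
    have Wc: "W \<subseteq> carrier_vec 1" and W0: "0\<^sub>v 1 \<in> W" and Ws: "\<forall>c. \<forall>v\<in>W. c \<cdot>\<^sub>v v \<in> W"
      using W by (auto simp: invariant_subspace_def)
    obtain v where v: "v \<in> W" "v \<noteq> 0\<^sub>v 1" using False W0 by auto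
    have vc: "v \<in> carrier_vec 1" using v Wc by auto
    have v0: "v $ 0 \<noteq> 0"
    proof
      assume "v $ 0 = 0"
      hence "v = 0\<^sub>v 1" using vc by (intro eq_vecI, auto)
      thus False using v by simp
    qed
    have "carrier_vec 1 \<subseteq> W"
    proof
      fix u :: "complex vec" assume u: "u \<in> carrier_vec 1"
      have "u = (u $ 0 / v $ 0) \<cdot>\<^sub>v v" using u vc v0 by (intro eq_vecI, auto)
      thus "u \<in> W" using Ws v by metis
    qed
    thus ?thesis using Wc by auto
  qed simp
qed

lemma deg_unique:
  assumes cd2: "card (cd G) = 2" and r1: "irreducible_rep G n \<rho>" and r2: "irreducible_rep G n' \<rho>'"
    and n1: "n \<noteq> 1" and n1': "n' \<noteq> 1"
  shows "n = n'"
proof (rule ccontr)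
  assume nn: "n \<noteq> n'"
  have fin: "finite (cd G)" using cd2 card.infinite by fastforce
  have sub: "{1, of_nat n, of_nat n'} \<subseteq> cd G"
    using irr_in_cd[OF r1] irr_in_cd[OF r2] irr_in_cd[OF triv_irr] by simp
  have "card {1 :: complex, of_nat n, of_nat n'} = 3"
    using nn n1 n1' by (simp add: of_nat_eq_1_iff)
  moreover have "card {1 :: complex, of_nat n, of_nat n'} \<le> card (cd G)" by (rule card_mono[OF fin sub])
  ultimately show False using cd2 by simp
qed

lemma gvz_zero:
  assumes gvz: "GVZ_group G" and r: "irreducible_rep G n \<rho>" and g: "g \<in> carrier G"
    and ne: "cmod (mat_trace (\<rho> g)) \<noteq> real n"
  shows "mat_trace (\<rho> g) = 0"
proof -
  have "g \<notin> char_center G (character G \<rho>)"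
    using ne g by (simp add: char_center_def char_val irr_deg[OF r]) (metis of_real_eq_iff of_real_of_nat_eq)
  hence "character G \<rho> g = 0" using gvz irr_in_Irr[OF r] g unfolding GVZ_group_def by blast
  thus ?thesis using g by (simp add: char_val)
qed

definition scal :: "('a \<Rightarrow> complex mat) \<Rightarrow> nat \<Rightarrow> 'a set" where
  "scal \<rho> n = {g \<in> carrier G. \<exists>\<mu>. \<rho> g = \<mu> \<cdot>\<^sub>m 1\<^sub>m n}"

lemma scal_iff:
  assumes u: "urep G n \<rho>" and g: "g \<in> carrier G"
  shows "g \<in> scal \<rho> n \<longleftrightarrow> cmod (mat_trace (\<rho> g)) = real n"
proof -
  have un: "unitary n (\<rho> g)" using u g by (simp add: urep_def)
  have n: "n > 0" using u by (simp add: urep_def is_rep_def)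
  show ?thesis
  proof
    assume "g \<in> scal \<rho> n"
    then obtain \<mu> where "\<rho> g = \<mu> \<cdot>\<^sub>m 1\<^sub>m n" by (auto simp: scal_def)
    thus "cmod (mat_trace (\<rho> g)) = real n" by (rule scalar_unitary_trace[OF un])
  next
    assume "cmod (mat_trace (\<rho> g)) = real n"
    hence "\<rho> g = (mat_trace (\<rho> g) / of_nat n) \<cdot>\<^sub>m 1\<^sub>m n" by (rule unitary_trace_scalar[OF un n])
    thus "g \<in> scal \<rho> n" using g by (auto simp: scal_def)
  qed
qed

lemma scal_normal:
  assumes u: "urep G n \<rho>"
  shows "scal \<rho> n \<lhd> G"
proof -
  have rep: "is_rep G n \<rho>" using u by (simp add: urep_def)
  have sub: "subgroup (scal \<rho> n) G"
  proof (rule subgroupI)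
    show "scal \<rho> n \<subseteq> carrier G" by (auto simp: scal_def)
    have "\<one> \<in> scal \<rho> n" using rep_one[OF rep] by (auto simp: scal_def intro!: exI[of _ 1])
    thus "scal \<rho> n \<noteq> {}" by auto
  next
    fix a assume a: "a \<in> scal \<rho> n"
    then obtain \<mu> where ac: "a \<in> carrier G" and m: "\<rho> a = \<mu> \<cdot>\<^sub>m 1\<^sub>m n" by (auto simp: scal_def)
    have "\<rho> (inv a) = adj (\<rho> a)" using urep_adj[OF u ac] by simp
    also have "\<dots> = cnj \<mu> \<cdot>\<^sub>m 1\<^sub>m n" using m by simp
    finally show "inv a \<in> scal \<rho> n" using ac by (auto simp: scal_def)
  next
    fix a b assume a: "a \<in> scal \<rho> n" and b: "b \<in> scal \<rho> n"
    then obtain \<mu> \<nu> where ac: "a \<in> carrier G" and bc: "b \<in> carrier G"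
      and m: "\<rho> a = \<mu> \<cdot>\<^sub>m 1\<^sub>m n" and nu: "\<rho> b = \<nu> \<cdot>\<^sub>m 1\<^sub>m n" by (auto simp: scal_def)
    have "\<rho> (a \<otimes> b) = (\<mu> \<cdot>\<^sub>m 1\<^sub>m n) * (\<nu> \<cdot>\<^sub>m 1\<^sub>m n)" using rep_mult[OF rep ac bc] m nu by simp
    also have "\<dots> = \<mu> \<cdot>\<^sub>m (1\<^sub>m n * (\<nu> \<cdot>\<^sub>m 1\<^sub>m n))"
      by (rule mult_smult_assoc_mat[OF one_carrier_mat smult_carrier_mat[OF one_carrier_mat]])
    also have "1\<^sub>m n * (\<nu> \<cdot>\<^sub>m 1\<^sub>m n) = \<nu> \<cdot>\<^sub>m (1\<^sub>m n :: complex mat)"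
      by (rule left_mult_one_mat[OF smult_carrier_mat[OF one_carrier_mat]])
    also have "\<mu> \<cdot>\<^sub>m (\<nu> \<cdot>\<^sub>m 1\<^sub>m n) = (\<mu> * \<nu>) \<cdot>\<^sub>m (1\<^sub>m n :: complex mat)"
      by (rule eq_matI, auto)
    finally show "a \<otimes> b \<in> scal \<rho> n" using ac bc by (auto simp: scal_def)
  qed
  have "x \<otimes> h \<otimes> inv x \<in> scal \<rho> n" if x: "x \<in> carrier G" and h: "h \<in> scal \<rho> n" for x h
  proof -
    obtain \<mu> where hc: "h \<in> carrier G" and m: "\<rho> h = \<mu> \<cdot>\<^sub>m 1\<^sub>m n" using h by (auto simp: scal_def)
    have rx: "\<rho> x \<in> carrier_mat n n" using rep x by (simp add: rep_carrier)
    have rix: "\<rho> (inv x) \<in> carrier_mat n n" using rep x by (simp add: rep_carrier)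
    have "\<rho> (x \<otimes> h \<otimes> inv x) = \<rho> x * (\<mu> \<cdot>\<^sub>m 1\<^sub>m n) * \<rho> (inv x)"
      using rep_mult[OF rep] x hc m by simp
    also have "\<rho> x * (\<mu> \<cdot>\<^sub>m 1\<^sub>m n) = \<mu> \<cdot>\<^sub>m \<rho> x"
      using mult_smult_distrib[OF rx one_carrier_mat] right_mult_one_mat[OF rx] by simp
    also have "(\<mu> \<cdot>\<^sub>m \<rho> x) * \<rho> (inv x) = \<mu> \<cdot>\<^sub>m (\<rho> x * \<rho> (inv x))"
      by (rule mult_smult_assoc_mat[OF rx rix])
    also have "\<rho> x * \<rho> (inv x) = 1\<^sub>m n" by (rule rep_inv_right[OF rep x])
    finally show ?thesis using x hc by (auto simp: scal_def)
  qed
  thus ?thesis using sub by (simp add: normal_inv_iff)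
qed

lemma card_scal:
  assumes fin: "finite (carrier G)" and gvz: "GVZ_group G" and r: "irreducible_rep G n \<rho>" and u: "urep G n \<rho>"
  shows "card (carrier G) = n * n * card (scal \<rho> n)"
proof -
  have "of_nat (card (carrier G)) = (\<Sum>g\<in>carrier G. mat_trace (\<rho> g) * mat_trace (\<rho> (inv g)))"
    using char_orth[OF fin r] by simp
  also have "\<dots> = (\<Sum>g\<in>carrier G. if g \<in> scal \<rho> n then of_nat (n * n) else (0::complex))"
  proof (rule sum.cong)
    fix g assume g: "g \<in> carrier G"
    have e: "mat_trace (\<rho> g) * mat_trace (\<rho> (inv g)) = complex_of_real ((cmod (mat_trace (\<rho> g)))\<^sup>2)"
      using urep_trace_inv[OF u g] complex_norm_square[of "mat_trace (\<rho> g)"] by simp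
    show "mat_trace (\<rho> g) * mat_trace (\<rho> (inv g)) = (if g \<in> scal \<rho> n then of_nat (n * n) else 0)"
    proof (cases "g \<in> scal \<rho> n")
      case True
      hence "cmod (mat_trace (\<rho> g)) = real n" using scal_iff[OF u g] by simp
      thus ?thesis using e True by (simp add: power2_eq_square)
    next
      case False
      hence "cmod (mat_trace (\<rho> g)) \<noteq> real n" using scal_iff[OF u g] by simp
      hence "mat_trace (\<rho> g) = 0" by (rule gvz_zero[OF gvz r g])
      thus ?thesis using False by simp
    qed
  qed simp
  also have "\<dots> = (\<Sum>g\<in>carrier G \<inter> scal \<rho> n. of_nat (n * n))"
    by (rule sum.inter_restrict[OF fin, symmetric])
  also have "carrier G \<inter> scal \<rho> n = scal \<rho> n" by (auto simp: scal_def)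
  finally have "(of_nat (card (carrier G)) :: complex) = of_nat (n * n * card (scal \<rho> n))" by simp
  thus ?thesis by (simp only: of_nat_eq_iff)
qed

end

context group begin

lemma comm_in_scal:
  assumes fin: "finite (carrier G)" and gvz: "GVZ_group G" and cd2: "card (cd G) = 2"
    and r: "irreducible_rep G n \<rho>" and u: "urep G n \<rho>" and n1: "n \<noteq> 1"
    and a: "a \<in> carrier G" and b: "b \<in> carrier G"
  shows "a \<otimes> b \<otimes> inv (b \<otimes> a) \<in> scal \<rho> n"
proof (rule ccontr)
  define c where "c = a \<otimes> b \<otimes> inv (b \<otimes> a)"
  have cc: "c \<in> carrier G" using a b by (simp add: c_def)
  assume "a \<otimes> b \<otimes> inv (b \<otimes> a) \<notin> scal \<rho> n"
  hence cn: "c \<notin> scal \<rho> n" by (simp add: c_def)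
  have n0: "n > 0" using r by (simp add: irreducible_rep_def is_rep_def)
  obtain n' \<sigma> where r': "irreducible_rep G n' \<sigma>" and u': "urep G n' \<sigma>"
    and triv: "\<forall>x\<in>scal \<rho> n. \<sigma> x = 1\<^sub>m n'" and sc: "\<sigma> c \<noteq> 1\<^sub>m n'"
    using exists_irr[OF fin scal_normal[OF u] cc cn] by blast
  have rep': "is_rep G n' \<sigma>" using r' by (simp add: irreducible_rep_def)
  have n'1: "n' \<noteq> 1"
  proof
    assume "n' = 1"
    hence "\<sigma> c = 1\<^sub>m n'" using one_dim[of \<sigma> a b] rep' a b by (simp add: c_def)
    thus False using sc by simp
  qed
  have nn: "n' = n" using deg_unique[OF cd2 r r' n1 n'1] by simp
  define Z where "Z = scal \<rho> n"
  define Z' where "Z' = scal \<sigma> n"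
  have ZZ': "Z \<subseteq> Z'"
  proof
    fix x assume x: "x \<in> Z"
    hence "\<sigma> x = 1 \<cdot>\<^sub>m 1\<^sub>m n" using triv nn by (auto simp: Z_def intro!: eq_matI)
    thus "x \<in> Z'" using x by (auto simp: Z'_def Z_def scal_def)
  qed
  have "n * n * card Z = n * n * card Z'"
    using card_scal[OF fin gvz r u] card_scal[OF fin gvz r' u'] nn unfolding Z_def Z'_def by metis
  hence "card Z = card Z'" using n0 by simp
  moreover have "finite Z'" using fin by (auto simp: Z'_def scal_def)
  ultimately have ZZ: "Z = Z'" using ZZ' card_subset_eq by metis
  have "(\<Sum>g\<in>carrier G. mat_trace (\<sigma> g)) = (\<Sum>g\<in>carrier G. if g \<in> Z then of_nat n else (0::complex))"
  proof (rule sum.cong)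
    fix g assume g: "g \<in> carrier G"
    show "mat_trace (\<sigma> g) = (if g \<in> Z then of_nat n else 0)"
    proof (cases "g \<in> Z")
      case True
      hence "\<sigma> g = 1\<^sub>m n" using triv nn by (simp add: Z_def)
      thus ?thesis using True by simp
    next
      case False
      hence "g \<notin> scal \<sigma> n'" using ZZ nn by (simp add: Z'_def)
      hence "cmod (mat_trace (\<sigma> g)) \<noteq> real n'" using scal_iff[OF u' g] by simp
      hence "mat_trace (\<sigma> g) = 0" by (rule gvz_zero[OF gvz r' g])
      thus ?thesis using False by simp
    qed
  qed simp
  also have "\<dots> = (\<Sum>g\<in>carrier G \<inter> Z. of_nat n)" by (rule sum.inter_restrict[OF fin, symmetric])
  also have "carrier G \<inter> Z = Z" by (auto simp: Z_def scal_def)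
  finally have sumv: "(\<Sum>g\<in>carrier G. mat_trace (\<sigma> g)) = of_nat n * of_nat (card Z)" by simp
  obtain c' where c': "(\<Sum>g\<in>carrier G. mat_trace (\<sigma> g)) = of_nat n' * c'"
    and c'1: "c' \<noteq> 0 \<longrightarrow> (\<forall>h\<in>carrier G. \<sigma> h = 1\<^sub>m n')"
    using avg_lemma[OF fin r'] by blast
  have "c' = 0" using c'1 sc cc by blast
  hence "of_nat n * (of_nat (card Z) :: complex) = 0" using sumv c' by simp
  hence "card Z = 0" using n0 by simp
  moreover have "\<one> \<in> Z" using scal_normal[OF u] normal_imp_subgroup subgroup.one_closed
    unfolding Z_def by blast
  moreover have "finite Z" using fin by (auto simp: Z_def scal_def)
  ultimately show False by simp
qed

lemma center_subgroup: "subgroup (group_center G) G"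
proof (rule subgroupI)
  show "group_center G \<subseteq> carrier G" unfolding group_center_def by blast
  have "\<one> \<in> group_center G" unfolding group_center_def by simp
  thus "group_center G \<noteq> {}" by blast
next
  fix a assume a: "a \<in> group_center G"
  have ac: "a \<in> carrier G" using a unfolding group_center_def by blast
  have com: "\<And>g. g \<in> carrier G \<Longrightarrow> a \<otimes> g = g \<otimes> a" using a unfolding group_center_def by blast
  have "inv a \<otimes> g = g \<otimes> inv a" if g: "g \<in> carrier G" for g
  proof -
    have "inv a \<otimes> g = inv a \<otimes> (g \<otimes> a) \<otimes> inv a" using ac g by (simp add: m_assoc)
    also have "\<dots> = inv a \<otimes> (a \<otimes> g) \<otimes> inv a" by (simp only: com[OF g])
    also have "\<dots> = g \<otimes> inv a" using ac g by (simp add: m_assoc[symmetric])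
    finally show ?thesis .
  qed
  thus "inv a \<in> group_center G" using ac unfolding group_center_def by blast
next
  fix a b assume a: "a \<in> group_center G" and b: "b \<in> group_center G"
  have ac: "a \<in> carrier G" and bc: "b \<in> carrier G" using a b unfolding group_center_def by blast+
  have ca: "\<And>g. g \<in> carrier G \<Longrightarrow> a \<otimes> g = g \<otimes> a" using a unfolding group_center_def by blast
  have cb: "\<And>g. g \<in> carrier G \<Longrightarrow> b \<otimes> g = g \<otimes> b" using b unfolding group_center_def by blast
  have "a \<otimes> b \<otimes> g = g \<otimes> (a \<otimes> b)" if g: "g \<in> carrier G" for g
  proof -
    have "a \<otimes> b \<otimes> g = a \<otimes> (b \<otimes> g)" using ac bc g by (rule m_assoc)
    also have "\<dots> = a \<otimes> (g \<otimes> b)" by (simp only: cb[OF g])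
    also have "\<dots> = (a \<otimes> g) \<otimes> b" using ac bc g by (simp only: m_assoc)
    also have "\<dots> = (g \<otimes> a) \<otimes> b" by (simp only: ca[OF g])
    also have "\<dots> = g \<otimes> (a \<otimes> b)" using g ac bc by (rule m_assoc)
    finally show ?thesis .
  qed
  thus "a \<otimes> b \<in> group_center G" using ac bc unfolding group_center_def by blast
qed

lemma main_group:
  assumes fin: "finite (carrier G)" and gvz: "GVZ_group G" and cd2: "card (cd G) = 2"
  shows "derived G (carrier G) \<subseteq> group_center G"
proof -
  have "c \<in> group_center G" if c: "c \<in> derived_set G (carrier G)" for c
  proof -
    obtain h1 h2 where h: "h1 \<in> carrier G" "h2 \<in> carrier G"
      and ce: "c = h1 \<otimes> h2 \<otimes> inv h1 \<otimes> inv h2" using c by blast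
    have ce': "c = h1 \<otimes> h2 \<otimes> inv (h2 \<otimes> h1)" using h ce by (simp add: inv_mult_group m_assoc)
    have cc: "c \<in> carrier G" using h ce by simp
    have "c \<otimes> z = z \<otimes> c" if z: "z \<in> carrier G" for z
    proof (rule ccontr)
      assume ne: "c \<otimes> z \<noteq> z \<otimes> c"
      define w where "w = c \<otimes> z \<otimes> inv (z \<otimes> c)"
      have wc: "w \<in> carrier G" using cc z by (simp add: w_def)
      have w1: "w \<notin> {\<one>}"
      proof
        assume "w \<in> {\<one>}"
        hence "c \<otimes> z \<otimes> inv (z \<otimes> c) = \<one>" by (simp add: w_def)
        hence e1: "c \<otimes> z \<otimes> inv (z \<otimes> c) = \<one>" .
        have "c \<otimes> z = (c \<otimes> z \<otimes> inv (z \<otimes> c)) \<otimes> (z \<otimes> c)" using cc z by (simp add: m_assoc)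
        also have "\<dots> = z \<otimes> c" using e1 cc z by simp
        finally have "c \<otimes> z = z \<otimes> c" .
        thus False using ne by simp
      qed
      obtain n \<rho> where r: "irreducible_rep G n \<rho>" and u: "urep G n \<rho>" and rw: "\<rho> w \<noteq> 1\<^sub>m n"
        using exists_irr[OF fin one_is_normal wc w1] by blast
      have rep: "is_rep G n \<rho>" using r by (simp add: irreducible_rep_def)
      show False
      proof (cases "n = 1")
        case True
        thus False using one_dim[OF _ cc z] rep rw by (simp add: w_def)
      next
        case False
        have "c \<in> scal \<rho> n" using comm_in_scal[OF fin gvz cd2 r u False h] ce' by simp
        then obtain \<mu> where m: "\<rho> c = \<mu> \<cdot>\<^sub>m 1\<^sub>m n" by (auto simp: scal_def)
        have rz: "\<rho> z \<in> carrier_mat n n" using rep z by (simp add: rep_carrier)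
        have "\<rho> (c \<otimes> z) = (\<mu> \<cdot>\<^sub>m 1\<^sub>m n) * \<rho> z" using rep_mult[OF rep cc z] m by simp
        also have "\<dots> = \<mu> \<cdot>\<^sub>m \<rho> z"
          using mult_smult_assoc_mat[OF one_carrier_mat rz] left_mult_one_mat[OF rz] by simp
        also have "\<dots> = \<rho> z * (\<mu> \<cdot>\<^sub>m 1\<^sub>m n)"
          using mult_smult_distrib[OF rz one_carrier_mat] right_mult_one_mat[OF rz] by simp
        also have "\<dots> = \<rho> (z \<otimes> c)" using rep_mult[OF rep z cc] m by simp
        finally have e: "\<rho> (c \<otimes> z) = \<rho> (z \<otimes> c)" .
        have "\<rho> w = \<rho> (c \<otimes> z) * \<rho> (inv (z \<otimes> c))" using rep_mult[OF rep] cc z by (simp add: w_def)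
        also have "\<dots> = 1\<^sub>m n" using e rep_inv_right[OF rep] cc z by simp
        finally show False using rw by simp
      qed
    qed
    thus ?thesis using cc by (auto simp: group_center_def)
  qed
  hence "derived_set G (carrier G) \<subseteq> group_center G" by blast
  thus ?thesis unfolding derived_def by (rule generate_subgroup_incl[OF _ center_subgroup])
qed

end

theorem mainTheorem5:
  fixes G :: "('a, 'b) monoid_scheme"
  assumes "group G" and "finite (carrier G)"
    and "GVZ_group G"
    and "card (cd G) = 2"
  shows "nilpotency_class_2 G"
  using group.main_group[OF assms(1) assms(2) assms(3) assms(4)] assms(3)
  unfolding nilpotency_class_2_def GVZ_group_def by blast

end
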